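(* Let $r\ge 3$ and $s$ be coprime odd integers with $0<s<r$, $q=\exp(i\pi s/r)$. Define $P_n\in\mathbb{Z}[X]$ by $P_0=1$, $P_1=X$, $P_{n+1}=XP_n+\epsilon_n\epsilon_{n+1}P_{n-1}$ for $1\le n\le r-2$; then $P_{r-2},P_{r-1}$ are coprime monic of degrees $r-2,r-1$ and $$\frac{P_{r-1}}{P_{r-2}}=X+\cfrac{\epsilon_1\epsilon_2}{X+\cfrac{\epsilon_2\epsilon_3}{X+\cfrac{\cdots}{\cdots+\cfrac{\epsilon_{r-2}\epsilon_{r-1}}{X}}}}.$$ Moreover: (i) the map $X\mapsto e_1$ induces an algebra isomorphism $\mathbb{Q}[X]/(P_{r-1})\cong V_q$; (ii) for every $f\in\mathbb{Q}[X]$, $$\epsilon(f(e_1))=\sum_{z\in\mathbb{C},\,P_{r-1}(z)=0}\operatorname{Res}_{z}\left(\frac{f\,P_{r-2}}{P_{r-1}}\right);$$ (iii) $P_{r-1}(X)=R(X^2)$, where $R$ is the Riley polynomial.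
   Context: For an integer $n$ put $[n]=\frac{q^n-q^{-n}}{q-q^{-1}}$, $[n]!=[n][n-1]\cdots[1]$, and for $1\le n\le r-1$ let $\epsilon_n=\operatorname{sign}[n]=(-1)^{\lfloor ns/r\rfloor}$ (so $\epsilon_1=1$ and $\epsilon_n=\epsilon_{r-n}$). A triple $(i,j,k)\in\{0,\dots,r-2\}^3$ is $r$-admissible if $i\le j+k$, $j\le i+k$, $k\le i+j$, $i+j+k$ is even and $i+j+k\le 2r-4$; for such a triple write $i=b+c$, $j=a+c$, $k=a+b$ and set $\langle i,j,k\rangle=(-1)^{a+b+c}\frac{[a+b+c+1]![a]![b]![c]!}{[a+b]![a+c]![b+c]!}$ (a nonzero real number). Let $V_q$ be the $\mathbb{Q}$-vector space with basis $e_0,\dots,e_{r-2}$, with the symmetric bilinear form $\eta$ for which this basis is orthogonal and $\eta(e_i,e_i)=(-1)^i\epsilon_{i+1}$, and the symmetric trilinear form $\omega$ with $\omega(e_i,e_j,e_k)=\operatorname{sign}\langle i,j,k\rangle$ if $(i,j,k)$ is $r$-admissible and $0$ otherwise. The product on $V_q$ is defined by $\eta(x\cdot y,z)=\omega(x,y,z)$; this makes $V_q$ a commutative associative unital $\mathbb{Q}$-algebra with unit $e_0$ and a Frobenius algebra with counit $\epsilon(f)=\eta(f,e_0)$ (so $\eta(x,y)=\epsilon(xy)$). The Riley polynomial $R(t)\in\mathbb{Z}[t]$ is the upper-left entry of the matrix product $A_1A_2\cdots A_{r-1}$, where $A_k=\begin{pmatrix}1&1\\0&1\end{pmatrix}^{\epsilon_k}$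 for $k$ odd and $A_k=\begin{pmatrix}1&0\\t&1\end{pmatrix}^{\epsilon_k}$ for $k$ even. *)

theory Defs
  imports "HOL-Complex_Analysis.Complex_Analysis"
    "HOL-Computational_Algebra.Fraction_Field"
begin

definition qroot :: "nat \<Rightarrow> nat \<Rightarrow> complex" where
  "qroot r s = exp (\<i> * complex_of_real (pi * real s / real r))"

definition qint :: "nat \<Rightarrow> nat \<Rightarrow> nat \<Rightarrow> complex" where
  "qint r s n = (let q = qroot r s in (q ^ n - inverse q ^ n) / (q - inverse q))"

definition qfact :: "nat \<Rightarrow> nat \<Rightarrow> nat \<Rightarrow> complex" where
  "qfact r s n = (\<Prod>k\<in>{1..n}. qint r s k)"

text \<open>epsilon_n = sign [n] ([n] is a real number).\<close>
definition eps :: "nat \<Rightarrow> nat \<Rightarrow> nat \<Rightarrow> int" where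
  "eps r s n = (if Re (qint r s n) > 0 then 1 else if Re (qint r s n) < 0 then -1 else 0)"

definition admissible :: "nat \<Rightarrow> nat \<Rightarrow> nat \<Rightarrow> nat \<Rightarrow> bool" where
  "admissible r i j k \<longleftrightarrow> i \<le> r - 2 \<and> j \<le> r - 2 \<and> k \<le> r - 2 \<and>
     i \<le> j + k \<and> j \<le> i + k \<and> k \<le> i + j \<and> even (i + j + k) \<and> i + j + k \<le> 2 * r - 4"

text \<open>i = b+c, j = a+c, k = a+b.\<close>
definition theta :: "nat \<Rightarrow> nat \<Rightarrow> nat \<Rightarrow> nat \<Rightarrow> nat \<Rightarrow> complex" where
  "theta r s i j k =
     (let a = (j + k - i) div 2; b = (i + k - j) div 2; c = (i + j - k) div 2 in
      (-1) ^ (a + b + c) * qfact r s (a + b + c + 1) * qfact r s a * qfact r s b * qfact r s c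
        / (qfact r s (a + b) * qfact r s (a + c) * qfact r s (b + c)))"

definition omega :: "nat \<Rightarrow> nat \<Rightarrow> nat \<Rightarrow> nat \<Rightarrow> nat \<Rightarrow> rat" where
  "omega r s i j k = (if admissible r i j k then (if Re (theta r s i j k) > 0 then 1 else if Re (theta r s i j k) < 0 then -1 else 0) else 0)"

definition etad :: "nat \<Rightarrow> nat \<Rightarrow> nat \<Rightarrow> rat" where
  "etad r s i = (-1) ^ i * of_int (eps r s (i + 1))"

text \<open>Elements of V_q: coefficient functions supported on {0..r-2} (basis e_0..e_{r-2}).\<close>
definition Vq :: "nat \<Rightarrow> (nat \<Rightarrow> rat) set" where
  "Vq r = {x. \<forall>k. r - 2 < k \<longrightarrow> x k = 0}"

definition ebas :: "nat \<Rightarrow> nat \<Rightarrow> rat" where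
  "ebas i = (\<lambda>k. if k = i then 1 else 0)"

definition eta :: "nat \<Rightarrow> nat \<Rightarrow> (nat \<Rightarrow> rat) \<Rightarrow> (nat \<Rightarrow> rat) \<Rightarrow> rat" where
  "eta r s x y = (\<Sum>i\<le>r - 2. x i * y i * etad r s i)"

definition omega3 :: "nat \<Rightarrow> nat \<Rightarrow> (nat \<Rightarrow> rat) \<Rightarrow> (nat \<Rightarrow> rat) \<Rightarrow> (nat \<Rightarrow> rat) \<Rightarrow> rat" where
  "omega3 r s x y z = (\<Sum>i\<le>r - 2. \<Sum>j\<le>r - 2. \<Sum>k\<le>r - 2. x i * y j * z k * omega r s i j k)"

text \<open>Product determined by eta(x*y, e_k) = omega(x,y,e_k), eta being diagonal.\<close>
definition vmult :: "nat \<Rightarrow> nat \<Rightarrow> (nat \<Rightarrow> rat) \<Rightarrow> (nat \<Rightarrow> rat) \<Rightarrow> nat \<Rightarrow> rat" where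
  "vmult r s x y = (\<lambda>k. if k \<le> r - 2 then omega3 r s x y (ebas k) / etad r s k else 0)"

definition counit :: "nat \<Rightarrow> nat \<Rightarrow> (nat \<Rightarrow> rat) \<Rightarrow> rat" where
  "counit r s x = eta r s x (ebas 0)"

fun vpow :: "nat \<Rightarrow> nat \<Rightarrow> (nat \<Rightarrow> rat) \<Rightarrow> nat \<Rightarrow> nat \<Rightarrow> rat" where
  "vpow r s x 0 = ebas 0"
| "vpow r s x (Suc n) = vmult r s x (vpow r s x n)"

definition veval :: "nat \<Rightarrow> nat \<Rightarrow> rat poly \<Rightarrow> nat \<Rightarrow> rat" where
  "veval r s f = (\<lambda>k. \<Sum>i\<le>degree f. coeff f i * vpow r s (ebas 1) i k)"

fun Ppoly :: "nat \<Rightarrow> nat \<Rightarrow> nat \<Rightarrow> int poly" where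
  "Ppoly r s 0 = 1"
| "Ppoly r s (Suc 0) = [:0, 1:]"
| "Ppoly r s (Suc (Suc n)) =
     [:0, 1:] * Ppoly r s (Suc n) + smult (eps r s (Suc n) * eps r s (Suc (Suc n))) (Ppoly r s n)"

text \<open>Continued fraction: cf m is the tail starting at level r-1-m, i.e.
  cf 0 = X (level r-1), cf (m+1) = X + eps_j eps_{j+1} / cf m with j = r-2-m.
  The full continued fraction is cf (r-2).\<close>
fun cfrac :: "nat \<Rightarrow> nat \<Rightarrow> nat \<Rightarrow> int poly fract" where
  "cfrac r s 0 = Fract [:0, 1:] 1"
| "cfrac r s (Suc m) = Fract [:0, 1:] 1 +
     of_int (eps r s (r - 2 - m) * eps r s (r - 1 - m)) / cfrac r s m"

type_synonym mat2 = "int poly \<times> int poly \<times> int poly \<times> int poly"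
  (* (a,b,c,d) represents the matrix [[a,b],[c,d]] *)

fun mmul2 :: "mat2 \<Rightarrow> mat2 \<Rightarrow> mat2" where
  "mmul2 (a, b, c, d) (e, f, g, h) = (a*e + b*g, a*f + b*h, c*e + d*g, c*f + d*h)"

text \<open>[[1,1],[0,1]]^m = [[1,m],[0,1]] and [[1,0],[t,1]]^m = [[1,0],[m t,1]] for m = eps_k = +-1.\<close>
definition rileyA :: "nat \<Rightarrow> nat \<Rightarrow> nat \<Rightarrow> mat2" where
  "rileyA r s k = (if odd k then (1, [:of_int (eps r s k):], 0, 1)
                   else (1, 0, [:0, of_int (eps r s k):], 1))"

fun rileyProd :: "nat \<Rightarrow> nat \<Rightarrow> nat \<Rightarrow> mat2" where
  "rileyProd r s 0 = (1, 0, 0, 1)"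
| "rileyProd r s (Suc n) = mmul2 (rileyProd r s n) (rileyA r s (Suc n))"

definition riley :: "nat \<Rightarrow> nat \<Rightarrow> int poly" where
  "riley r s = fst (rileyProd r s (r - 1))"

end

theory Submission
  imports Defs
begin


lemma qroot_nz: "qroot r s \<noteq> 0" by (simp add: qroot_def)

lemma qroot_pow: "qroot r s ^ m = exp (2 * complex_of_real pi * \<i> * complex_of_nat (m * s) / complex_of_nat (2*r))"
  if "r > 0" for m
proof -
  have "qroot r s ^ m = exp ((\<i> * complex_of_real (pi * real s / real r)) * of_nat m)"
    unfolding exp_of_nat2_mult qroot_def ..
  also have "(\<i> * complex_of_real (pi * real s / real r)) * of_nat m
      = 2 * complex_of_real pi * \<i> * complex_of_nat (m * s) / complex_of_nat (2*r)"
    using that by (simp add: field_simps)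
  finally show ?thesis .
qed

lemma qroot_pow_r: assumes "r > 0" "odd s" shows "qroot r s ^ r = -1"
proof -
  have "qroot r s ^ r = exp ((\<i> * complex_of_real pi) * of_nat s)"
    unfolding qroot_def exp_of_nat2_mult[symmetric]
    using assms by (simp add: divide_simps mult.commute mult.left_commute)
  also have "\<dots> = (-1) ^ s" by (simp add: exp_of_nat2_mult exp_pi_i')
  also have "\<dots> = -1" using assms by simp
  finally show ?thesis .
qed

lemma qroot_pow_ne1: assumes "r > 0" "coprime r s" "0 < m" "m < r"
  shows "qroot r s ^ (2*m) \<noteq> 1"
proof
  assume "qroot r s ^ (2*m) = 1"
  then have "exp (2 * complex_of_real pi * \<i> * complex_of_nat ((2*m) * s) / complex_of_nat (2*r)) = 1"
    using qroot_pow[OF assms(1)] by simp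
  then have A: "(2*r) dvd ((2*m) * s)" using assms by (subst (asm) complex_root_unity_eq_1) auto
  then have "r dvd (m * s)" by auto
  then have "r dvd m" using assms(2) by (metis coprime_dvd_mult_left_iff)
  with assms show False by (auto dest: dvd_imp_le)
qed

lemma cnj_qroot: "cnj (qroot r s) = inverse (qroot r s)"
  by (simp add: qroot_def exp_cnj exp_minus[symmetric])

definition qr :: "nat \<Rightarrow> nat \<Rightarrow> nat \<Rightarrow> real" where "qr r s n = Re (qint r s n)"

lemma qint_real: "qint r s n = complex_of_real (qr r s n)"
proof -
  define q where "q = qroot r s"
  have "cnj (qint r s n) = (inverse q ^ n - q ^ n) / (inverse q - q)"
    unfolding qint_def Let_def q_def[symmetric]
    by (simp add: cnj_qroot q_def)
  also have "\<dots> = qint r s n"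
    unfolding qint_def Let_def q_def[symmetric]
    by (metis minus_diff_eq minus_divide_divide)
  finally have "cnj (qint r s n) = qint r s n" .
  then have "Im (cnj (qint r s n)) = Im (qint r s n)" by simp
  then have "Im (qint r s n) = 0" by simp
  then show ?thesis unfolding qr_def by (simp add: complex_eq_iff)
qed

lemma qint_ptolemy: "qint r s (x+y) * qint r s (x+z) = qint r s x * qint r s (x+y+z) + qint r s y * qint r s z"
proof -
  define q where "q = qroot r s"
  have q0: "q \<noteq> 0" using qroot_nz q_def by simp
  define A where "A = q^x" define B where "B = q^y" define C where "C = q^z"
  define A' where "A' = inverse q^x" define B' where "B' = inverse q^y" define C' where "C' = inverse q^z"
  have AA: "A * A' = 1" "B * B' = 1" "C * C' = 1" using q0 unfolding A_def A'_def B_def B'_def C_def C'_def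
    by (simp_all add: power_mult_distrib[symmetric])
  have "(A*B - A'*B') * (A*C - A'*C') = (A - A') * (A*B*C - A'*B'*C') + (B - B') * (C - C')"
  proof -
    have "(A*B - A'*B') * (A*C - A'*C') - ((A - A') * (A*B*C - A'*B'*C') + (B - B') * (C - C'))
       = (A*A' - 1) * (B*C - B*C' - B'*C + B'*C')"
      by (simp add: algebra_simps)
    also have "\<dots> = 0" using AA by simp
    finally show ?thesis by simp
  qed
  then show ?thesis unfolding qint_def Let_def q_def[symmetric]
    unfolding power_add A_def[symmetric] B_def[symmetric] C_def[symmetric]
      A'_def[symmetric] B'_def[symmetric] C'_def[symmetric]
    by (simp add: divide_simps)
qed

lemma qint_sym: assumes "r > 0" "odd s" "n \<le> r" shows "qint r s (r - n) = qint r s n"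
proof -
  define q where "q = qroot r s"
  have q0: "q \<noteq> 0" using qroot_nz q_def by simp
  have "q^(r-n) * q^n = -1" using qroot_pow_r[OF assms(1,2)] assms(3)
    by (simp add: q_def power_add[symmetric])
  then have 1: "q^(r-n) = - (inverse q ^ n)" using q0 by (simp add: field_simps power_inverse)
  then have 2: "inverse q^(r-n) = - (q ^ n)" using q0
    by (metis inverse_inverse_eq inverse_minus_eq power_inverse)
  show ?thesis unfolding qint_def Let_def q_def[symmetric] 1 2 by simp
qed

lemma qint_nz: assumes "r > 0" "coprime r s" "0 < n" "n < r" shows "qint r s n \<noteq> 0"
proof -
  define q where "q = qroot r s"
  have q0: "q \<noteq> 0" using qroot_nz q_def by simp
  have ne: "q^n - inverse q ^ n \<noteq> 0" if "0<n" "n<r" for n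
  proof
    assume "q^n - inverse q ^ n = 0"
    then have "q^n * q^n = 1" using q0 by (simp add: field_simps power_inverse)
    then have "q^(2*n) = 1" by (simp add: power_add[symmetric] mult_2)
    with qroot_pow_ne1[OF assms(1,2) that] show False by (simp add: q_def)
  qed
  have "q - inverse q \<noteq> 0" using ne[of 1] assms by simp
  then show ?thesis using ne[OF assms(3,4)] unfolding qint_def Let_def q_def[symmetric] by simp
qed

lemma qint_1: assumes "r > 1" "coprime r s" shows "qint r s 1 = 1"
proof -
  have "qint r s 1 \<noteq> 0" using qint_nz[of r s 1] assms by simp
  then show ?thesis unfolding qint_def Let_def by (simp split: if_splits)
qed

lemma qr_ptolemy: "qr r s (x+y) * qr r s (x+z) = qr r s x * qr r s (x+y+z) + qr r s y * qr r s z"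
  using qint_ptolemy[of r s x y z] unfolding qint_real
  by (metis of_real_add of_real_eq_iff of_real_mult)
lemma qr_sym: "r > 0 \<Longrightarrow> odd s \<Longrightarrow> n \<le> r \<Longrightarrow> qr r s (r - n) = qr r s n"
  unfolding qr_def using qint_sym by simp
lemma qr_nz: "r > 0 \<Longrightarrow> coprime r s \<Longrightarrow> 0 < n \<Longrightarrow> n < r \<Longrightarrow> qr r s n \<noteq> 0"
  using qint_nz qint_real by (metis of_real_0)
lemma qr_1: "r > 1 \<Longrightarrow> coprime r s \<Longrightarrow> qr r s 1 = 1"
  unfolding qr_def using qint_1 by simp

lemma eps_qr: "eps r s n = (if qr r s n > 0 then 1 else if qr r s n < 0 then -1 else 0)"
  unfolding eps_def qr_def by simp



locale signs =
  fixes r :: nat and ex :: "nat \<Rightarrow> nat"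
  assumes r3: "3 \<le> r" and oddr: "odd r"
  and ex1: "ex 1 = 0"
  and exsym: "1 \<le> n \<Longrightarrow> n \<le> r-1 \<Longrightarrow> ex (r - n) = ex n"
  and key: "1\<le>x \<Longrightarrow> 1\<le>y \<Longrightarrow> 1\<le>z \<Longrightarrow> x+y+z \<le> r-1 \<Longrightarrow>
     even (ex x + ex y + ex z + ex (x+y+z)) \<Longrightarrow> even (ex x + ex (x+y) + ex (x+z) + ex (x+y+z))"
begin

fun F :: "nat \<Rightarrow> nat" where
  "F 0 = 0" | "F (Suc n) = F n + ex (Suc n)"

definition E :: "nat \<Rightarrow> nat \<Rightarrow> nat \<Rightarrow> nat" where
  "E a b c = a+b+c + F (Suc (a+b+c)) + F a + F b + F c + F (a+b) + F (a+c) + F (b+c) + (a+b) + ex (Suc (a+b))"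

definition Mz :: "int \<Rightarrow> int \<Rightarrow> int \<Rightarrow> rat" where
  "Mz a b c = (if 0 \<le> a \<and> 0 \<le> b \<and> 0 \<le> c \<and> a+b+c \<le> int r - 2 then (-1) ^ E (nat a) (nat b) (nat c) else 0)"

definition cz :: "int \<Rightarrow> rat" where
  "cz n = (-1) ^ (ex (nat n) + ex (Suc (nat n)))"

lemma Mz0: "a < 0 \<or> b < 0 \<or> c < 0 \<or> a+b+c > int r - 2 \<Longrightarrow> Mz a b c = 0"
  unfolding Mz_def by auto

lemma Mz_nat: "a+b+c \<le> r - 2 \<Longrightarrow> Mz (int a) (int b) (int c) = (-1) ^ E a b c"
  unfolding Mz_def using r3 by auto

lemma cz_nat: "cz (int n) = (-1) ^ (ex n + ex (Suc n))"
  unfolding cz_def by simp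

lemma pm_eq: "even (A + B) \<Longrightarrow> ((-1::rat) ^ A = (-1) ^ B)"
  by (metis neg_one_even_power neg_one_odd_power odd_add)

lemma pm_eq': "odd (A + B) \<Longrightarrow> ((-1::rat) ^ A = - ((-1) ^ B))"
  by (cases "even A") auto

lemma four: "even (A + B + C + D) \<Longrightarrow> odd (A + B) \<or> even (A + C) \<Longrightarrow>
   (-1::rat) ^ A + (-1) ^ B = (-1) ^ C + (-1) ^ D"
  by (cases "even A"; cases "even B"; cases "even C"; cases "even D") auto

lemma case_b:
  "even ((ex (Suc (a+c)) + ex (Suc (Suc (a+c)))) + E a 0 c + (ex (Suc a) + ex (Suc (Suc a))) + E (Suc a) 0 c)"
  unfolding E_def by (simp del: even_add odd_add) presburger

lemma case_c:
  "odd (E 0 b (Suc c) + (ex (Suc b) + ex (Suc (Suc b))) + E 0 (Suc b) c)"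
  unfolding E_def by (simp del: even_add odd_add) presburger

lemma case_d: "even (E a b 0)"
  unfolding E_def by (simp del: even_add odd_add) presburger

lemma gen_par1:
  "even (E (Suc a) b (Suc c) + (E a (Suc b) c + ex (Suc (a+c)) + ex (Suc (Suc (a+c))) + 1)
       + E a b (Suc c) + (E (Suc a) (Suc b) c + ex (Suc (Suc (a+b))) + ex (Suc (Suc (Suc (a+b)))) + 1))"
  unfolding E_def by (simp del: even_add odd_add) presburger

lemma gen_par2:
  "even (E (Suc a) b (Suc c) + (E a (Suc b) c + ex (Suc (a+c)) + ex (Suc (Suc (a+c))) + 1)
    + ex (Suc c) + ex (Suc a) + ex (Suc b) + ex (Suc (Suc (Suc (a+b+c)))))"
  unfolding E_def by (simp del: even_add odd_add) presburger

lemma gen_par3: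
  "even (E (Suc a) b (Suc c) + E a b (Suc c)
    + ex (Suc a) + ex (Suc (Suc (a+c))) + ex (Suc (Suc (a+b))) + ex (Suc (Suc (Suc (a+b+c)))))"
  unfolding E_def by (simp del: even_add odd_add) presburger

lemma case_e2:
  assumes "ex (Suc b) = ex (Suc (Suc (a+c)))" "ex (Suc (Suc (a+b))) = ex (Suc c)"
  shows "odd (E a (Suc b) c + (ex (Suc (a+c)) + ex (Suc (Suc (a+c)))) + E a b (Suc c))"
  using assms unfolding E_def by (simp del: even_add odd_add) presburger

lemma Mz_nat': "x = int a \<Longrightarrow> y = int b \<Longrightarrow> z = int c \<Longrightarrow> int a+int b+int c \<le> int r - 2 \<Longrightarrow> Mz x y z = (-1) ^ E a b c"
  unfolding Mz_def by simp

lemma cz': "x = int n \<Longrightarrow> cz x = (-1) ^ (ex n + ex (Suc n))"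
  using cz_nat by simp

lemma EE1:
  fixes u v w :: int
  assumes A: "0 \<le> v+w" "v+w \<le> int r - 2" "1 \<le> u+w" "u+w-1 \<le> int r - 2" "0 \<le> u+v" "u+v \<le> int r - 2"
  and 1: "u < 0 \<or> w < 0 \<or> v < -1"
  shows "Mz u v w - cz (u+w-1) * Mz (u-1) (v+1) (w-1) = Mz (u-1) v w - cz (u+v+1) * Mz u (v+1) (w-1)"
proof -
  show ?thesis using 1 by (auto simp: Mz0)
qed

lemma EE2:
  fixes u v w :: int
  assumes A: "0 \<le> v+w" "v+w \<le> int r - 2" "1 \<le> u+w" "u+w-1 \<le> int r - 2" "0 \<le> u+v" "u+v \<le> int r - 2"
  and 2: "v = -1" "u \<ge> 1" "w = 0"
  shows "Mz u v w - cz (u+w-1) * Mz (u-1) (v+1) (w-1) = Mz (u-1) v w - cz (u+v+1) * Mz u (v+1) (w-1)"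
proof -
  show ?thesis using 2 by (auto simp: Mz0)
qed

lemma EE3:
  fixes u v w :: int
  assumes A: "0 \<le> v+w" "v+w \<le> int r - 2" "1 \<le> u+w" "u+w-1 \<le> int r - 2" "0 \<le> u+v" "u+v \<le> int r - 2"
  and 3: "v = -1" "u \<ge> 1" "w \<ge> 1"
  shows "Mz u v w - cz (u+w-1) * Mz (u-1) (v+1) (w-1) = Mz (u-1) v w - cz (u+v+1) * Mz u (v+1) (w-1)"
proof -
  define a where "a = nat (u-1)"
  define c where "c = nat (w-1)"
  have ac: "u = int a + 1" "w = int c + 1" using 3 by (simp_all add: a_def c_def)
  have T2: "Mz (u-1) (v+1) (w-1) = (-1) ^ E a 0 c"
    by (rule Mz_nat') (use ac 3 A in linarith)+
  have T4: "Mz u (v+1) (w-1) = (-1) ^ E (Suc a) 0 c"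
    by (rule Mz_nat') (use ac 3 A in linarith)+
  have c1: "cz (u+w-1) = (-1) ^ (ex (Suc (a+c)) + ex (Suc (Suc (a+c))))"
    by (rule cz') (use ac in simp)
  have c2: "cz (u+v+1) = (-1) ^ (ex (Suc a) + ex (Suc (Suc a)))"
    by (rule cz') (use ac 3 in simp)
  have "(-1::rat) ^ ((ex (Suc (a+c)) + ex (Suc (Suc (a+c)))) + E a 0 c) = (-1) ^ ((ex (Suc a) + ex (Suc (Suc a))) + E (Suc a) 0 c)"
    by (rule pm_eq) (use case_b[of a c] in presburger)
  then show ?thesis unfolding T2 T4 c1 c2 using 3 by (simp add: Mz0 power_add)
qed

lemma EE4:
  fixes u v w :: int
  assumes A: "0 \<le> v+w" "v+w \<le> int r - 2" "1 \<le> u+w" "u+w-1 \<le> int r - 2" "0 \<le> u+v" "u+v \<le> int r - 2"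
  and 4: "v \<ge> 0" "u = 0" "w \<ge> 1"
  shows "Mz u v w - cz (u+w-1) * Mz (u-1) (v+1) (w-1) = Mz (u-1) v w - cz (u+v+1) * Mz u (v+1) (w-1)"
proof -
  define b where "b = nat v"
  define c where "c = nat (w-1)"
  have bc: "v = int b" "w = int c + 1" using 4 by (simp_all add: b_def c_def)
  have T1: "Mz u v w = (-1) ^ E 0 b (Suc c)"
    by (rule Mz_nat') (use bc 4 A in linarith)+
  have T4: "Mz u (v+1) (w-1) = (-1) ^ E 0 (Suc b) c"
    by (rule Mz_nat') (use bc 4 A in linarith)+
  have c2: "cz (u+v+1) = (-1) ^ (ex (Suc b) + ex (Suc (Suc b)))"
    by (rule cz') (use bc 4 in simp)
  have "(-1::rat) ^ E 0 b (Suc c) = - ((-1) ^ ((ex (Suc b) + ex (Suc (Suc b))) + E 0 (Suc b) c))"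
    by (rule pm_eq') (use case_c[of b c] in presburger)
  then show ?thesis unfolding T1 T4 c2 using 4 by (simp add: Mz0 power_add)
qed

lemma EE5:
  fixes u v w :: int
  assumes A: "0 \<le> v+w" "v+w \<le> int r - 2" "1 \<le> u+w" "u+w-1 \<le> int r - 2" "0 \<le> u+v" "u+v \<le> int r - 2"
  and 5: "v \<ge> 0" "u \<ge> 1" "w = 0"
  shows "Mz u v w - cz (u+w-1) * Mz (u-1) (v+1) (w-1) = Mz (u-1) v w - cz (u+v+1) * Mz u (v+1) (w-1)"
proof -
  define a where "a = nat (u-1)"
  define b where "b = nat v"
  have ab: "u = int a + 1" "v = int b" using 5 by (simp_all add: a_def b_def)
  have T1: "Mz u v w = (-1) ^ E (Suc a) b 0"
    by (rule Mz_nat') (use ab 5 A in linarith)+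
  have T3: "Mz (u-1) v w = (-1) ^ E a b 0"
    by (rule Mz_nat') (use ab 5 A in linarith)+
  show ?thesis unfolding T1 T3 using 5 case_d[of a b] case_d[of "Suc a" b] by (simp add: Mz0)
qed

lemma EE6:
  fixes u v w :: int
  assumes A: "0 \<le> v+w" "v+w \<le> int r - 2" "1 \<le> u+w" "u+w-1 \<le> int r - 2" "0 \<le> u+v" "u+v \<le> int r - 2"
  and 6: "v \<ge> 0" "u \<ge> 1" "w \<ge> 1" "u+v+w \<le> int r - 2"
  shows "Mz u v w - cz (u+w-1) * Mz (u-1) (v+1) (w-1) = Mz (u-1) v w - cz (u+v+1) * Mz u (v+1) (w-1)"
proof -
  define a where "a = nat (u-1)"
  define b where "b = nat v"
  define c where "c = nat (w-1)"
  have abc: "u = int a + 1" "v = int b" "w = int c + 1" using 6 by (simp_all add: a_def b_def c_def)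
  have T1: "Mz u v w = (-1) ^ E (Suc a) b (Suc c)"
    by (rule Mz_nat') (use abc 6 A in linarith)+
  have T2: "Mz (u-1) (v+1) (w-1) = (-1) ^ E a (Suc b) c"
    by (rule Mz_nat') (use abc 6 A in linarith)+
  have T3: "Mz (u-1) v w = (-1) ^ E a b (Suc c)"
    by (rule Mz_nat') (use abc 6 A in linarith)+
  have T4: "Mz u (v+1) (w-1) = (-1) ^ E (Suc a) (Suc b) c"
    by (rule Mz_nat') (use abc 6 A in linarith)+
  have c1: "cz (u+w-1) = (-1) ^ (ex (Suc (a+c)) + ex (Suc (Suc (a+c))))"
    by (rule cz') (use abc in simp)
  have c2: "cz (u+v+1) = (-1) ^ (ex (Suc (Suc (a+b))) + ex (Suc (Suc (Suc (a+b)))))"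
    by (rule cz') (use abc in simp)
  define X1 where "X1 = E (Suc a) b (Suc c)"
  define X2 where "X2 = E a (Suc b) c + ex (Suc (a+c)) + ex (Suc (Suc (a+c))) + 1"
  define X3 where "X3 = E a b (Suc c)"
  define X4 where "X4 = E (Suc a) (Suc b) c + ex (Suc (Suc (a+b))) + ex (Suc (Suc (Suc (a+b)))) + 1"
  have p1: "even (X1 + X2 + X3 + X4)" unfolding X1_def X2_def X3_def X4_def
    using gen_par1[of a b c] by (simp add: algebra_simps)
  have "a+b+c+3 \<le> r - 1" using abc 6 by linarith
  then have bnd: "1 \<le> Suc a" "1 \<le> Suc b" "1 \<le> Suc c" "Suc a + Suc b + Suc c \<le> r - 1" by simp_all
  have eqs: "Suc a + Suc b + Suc c = Suc (Suc (Suc (a+b+c)))" "Suc a + Suc b = Suc (Suc (a+b))"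
     "Suc a + Suc c = Suc (Suc (a+c))" by simp_all
  have k: "even (ex (Suc a) + ex (Suc b) + ex (Suc c) + ex (Suc (Suc (Suc (a+b+c))))) \<Longrightarrow>
     even (ex (Suc a) + ex (Suc (Suc (a+b))) + ex (Suc (Suc (a+c))) + ex (Suc (Suc (Suc (a+b+c)))))"
    using key[OF bnd, unfolded eqs] by simp
  have p2: "odd (X1 + X2) \<or> even (X1 + X3)"
  proof -
    have e2: "even (X1 + X2 + ex (Suc c) + ex (Suc a) + ex (Suc b) + ex (Suc (Suc (Suc (a+b+c)))))"
      unfolding X1_def X2_def using gen_par2[of a b c] by (simp add: algebra_simps)
    have e3: "even (X1 + X3 + ex (Suc a) + ex (Suc (Suc (a+c))) + ex (Suc (Suc (a+b))) + ex (Suc (Suc (Suc (a+b+c)))))"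
      unfolding X1_def X3_def using gen_par3[of a b c] by (simp add: algebra_simps)
    have eqs: "Suc a + Suc b + Suc c = Suc (Suc (Suc (a+b+c)))" "Suc a + Suc b = Suc (Suc (a+b))"
       "Suc a + Suc c = Suc (Suc (a+c))" by simp_all
    show ?thesis using e2 e3 k by presburger
  qed
  have "(-1::rat) ^ X1 + (-1) ^ X2 = (-1) ^ X3 + (-1) ^ X4" using four[OF p1 p2] .
  then show ?thesis unfolding T1 T2 T3 T4 c1 c2 X1_def X2_def X3_def X4_def
    by (simp add: power_add algebra_simps)
qed

lemma EE7:
  fixes u v w :: int
  assumes A: "0 \<le> v+w" "v+w \<le> int r - 2" "1 \<le> u+w" "u+w-1 \<le> int r - 2" "0 \<le> u+v" "u+v \<le> int r - 2"
  and 7: "v \<ge> 0" "u \<ge> 1" "w \<ge> 1" "u+v+w = int r - 1"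
  shows "Mz u v w - cz (u+w-1) * Mz (u-1) (v+1) (w-1) = Mz (u-1) v w - cz (u+v+1) * Mz u (v+1) (w-1)"
proof -
  define a where "a = nat (u-1)"
  define b where "b = nat v"
  define c where "c = nat (w-1)"
  have abc: "u = int a + 1" "v = int b" "w = int c + 1" using 7 by (simp_all add: a_def b_def c_def)
  have S: "a+b+c+3 = r" using abc 7 by linarith
  have T2: "Mz (u-1) (v+1) (w-1) = (-1) ^ E a (Suc b) c"
    by (rule Mz_nat') (use abc 7 A in linarith)+
  have T3: "Mz (u-1) v w = (-1) ^ E a b (Suc c)"
    by (rule Mz_nat') (use abc 7 A in linarith)+
  have c1: "cz (u+w-1) = (-1) ^ (ex (Suc (a+c)) + ex (Suc (Suc (a+c))))"
    by (rule cz') (use abc in simp)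
  have s1: "ex (Suc b) = ex (Suc (Suc (a+c)))"
    using exsym[of "Suc (Suc (a+c))"] S by (auto simp: numeral_eq_Suc)
  have s2: "ex (Suc (Suc (a+b))) = ex (Suc c)"
    using exsym[of "Suc c"] S by (auto simp: numeral_eq_Suc)
  have "(-1::rat) ^ E a b (Suc c) = - ((-1) ^ ((ex (Suc (a+c)) + ex (Suc (Suc (a+c)))) + E a (Suc b) c))"
    by (rule pm_eq') (use case_e2[OF s1 s2] in presburger)
  then show ?thesis unfolding T2 T3 c1 using 7 by (simp add: Mz0 power_add)
qed

lemma EE8:
  fixes u v w :: int
  assumes A: "0 \<le> v+w" "v+w \<le> int r - 2" "1 \<le> u+w" "u+w-1 \<le> int r - 2" "0 \<le> u+v" "u+v \<le> int r - 2"
  and 8: "v \<ge> 0" "u \<ge> 1" "w \<ge> 1" "u+v+w \<ge> int r"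
  shows "Mz u v w - cz (u+w-1) * Mz (u-1) (v+1) (w-1) = Mz (u-1) v w - cz (u+v+1) * Mz u (v+1) (w-1)"
proof -
  show ?thesis using 8 by (simp add: Mz0)
qed

theorem EE:
  fixes u v w :: int
  assumes A: "0 \<le> v+w" "v+w \<le> int r - 2" "1 \<le> u+w" "u+w-1 \<le> int r - 2" "0 \<le> u+v" "u+v \<le> int r - 2"
  shows "Mz u v w - cz (u+w-1) * Mz (u-1) (v+1) (w-1) = Mz (u-1) v w - cz (u+v+1) * Mz u (v+1) (w-1)"
proof (cases "u < 0 \<or> w < 0 \<or> v < -1")
  case True then show ?thesis using EE1[OF A] by blast
next
  case False
  then have B: "u \<ge> 0" "w \<ge> 0" "v \<ge> -1" by auto
  show ?thesis
  proof (cases "v = -1")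
    case True
    then have "u \<ge> 1" using A by linarith
    then show ?thesis using EE2[OF A] EE3[OF A] True B by (cases "w = 0") auto
  next
    case False
    then have v0: "v \<ge> 0" using B by linarith
    show ?thesis
    proof (cases "u = 0")
      case True
      then have "w \<ge> 1" using A by linarith
      then show ?thesis using EE4[OF A v0 True] by blast
    next
      case False
      then have u1: "u \<ge> 1" using B by linarith
      show ?thesis
      proof (cases "w = 0")
        case True then show ?thesis using EE5[OF A v0 u1] by blast
      next
        case False
        then have w1: "w \<ge> 1" using B by linarith
        consider "u+v+w \<le> int r - 2" | "u+v+w = int r - 1" | "u+v+w \<ge> int r" by linarith
        then show ?thesis using EE6[OF A v0 u1 w1] EE7[OF A v0 u1 w1] EE8[OF A v0 u1 w1] by cases auto
      qed
    qed
  qed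
qed


definition Mc :: "nat \<Rightarrow> nat \<Rightarrow> nat \<Rightarrow> rat" where
  "Mc i j k = (if admissible r i j k then (-1) ^ E ((j+k-i) div 2) ((i+k-j) div 2) ((i+j-k) div 2) else 0)"

definition cn :: "nat \<Rightarrow> rat" where "cn n = (-1) ^ (ex n + ex (Suc n))"

lemma Mc_par: "odd (i+j+k) \<Longrightarrow> Mc i j k = 0"
  unfolding Mc_def admissible_def by auto

lemma Mc_Mz:
  fixes a b c :: int
  assumes "int i = b + c" "int j = a + c" "int k = a + b"
  shows "Mc i j k = Mz a b c"
proof (cases "a \<ge> 0 \<and> b \<ge> 0 \<and> c \<ge> 0")
  case True
  have d: "(j+k-i) div 2 = nat a" "(i+k-j) div 2 = nat b" "(i+j-k) div 2 = nat c"
    using assms True by (simp_all add: nat_eq_iff)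
  have "admissible r i j k \<longleftrightarrow> a+b+c \<le> int r - 2"
    unfolding admissible_def using assms True r3 by auto presburger+
  then show ?thesis unfolding Mc_def Mz_def d using True by simp
next
  case False
  then have "\<not> admissible r i j k" unfolding admissible_def using assms by auto
  then show ?thesis unfolding Mc_def using False by (auto simp: Mz0)
qed


lemma par_Mc1b: "odd (E j 0 (Suc 0) + ex (Suc j) + ex (Suc (Suc j)))"
  unfolding E_def by (simp del: even_add odd_add) presburger

lemma Mc1: assumes "l \<le> r-2" "j \<le> r-2"
  shows "Mc 1 l j = (if j = Suc l then 1 else 0) + (if Suc j = l then - cn l else 0)"
proof -
  consider "j = Suc l" | "Suc j = l" | "j \<noteq> Suc l" "Suc j \<noteq> l" by blast
  then show ?thesis
  proof cases
    case 1
    have "admissible r 1 l j" unfolding admissible_def using 1 assms by auto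
    moreover have "(l+j-1) div 2 = l" "(1+j-l) div 2 = 1" "(1+l-j) div 2 = 0" using 1 by auto
    ultimately show ?thesis unfolding Mc_def using 1 case_d[of l 1] by simp
  next
    case 2
    have "admissible r 1 l j" unfolding admissible_def using 2 assms by auto
    moreover have "(l+j-1) div 2 = j" "(1+j-l) div 2 = 0" "(1+l-j) div 2 = 1" using 2 by auto
    moreover have "(-1::rat) ^ E j 0 (Suc 0) = - ((-1) ^ (ex (Suc j) + ex (Suc (Suc j))))"
      by (rule pm_eq') (use par_Mc1b[of j] in \<open>simp add: add.assoc\<close>)
    ultimately show ?thesis unfolding Mc_def cn_def using 2 by simp
  next
    case 3
    have "j = l \<or> j + 1 < l \<or> l + 1 < j" using 3 by linarith
    then have "\<not> admissible r 1 l j" unfolding admissible_def by auto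
    then show ?thesis unfolding Mc_def using 3 by simp
  qed
qed

lemma Mc_i0: assumes "i \<le> r-2" "k \<le> r-2" shows "Mc i 0 k = (if k = i then 1 else 0)"
proof (cases "k = i")
  case True
  have "admissible r i 0 k" unfolding admissible_def using True assms by auto
  then show ?thesis unfolding Mc_def using True case_d[of 0 i] by simp
next
  case False
  then have "\<not> admissible r i 0 k" unfolding admissible_def by auto
  then show ?thesis unfolding Mc_def using False by simp
qed

lemma Mc_top: assumes "i \<le> r-2" shows "Mc i (r-2) (r-2) = (if i = 0 then 1 else 0)"
proof (cases "i = 0")
  case True
  have "admissible r i (r-2) (r-2)" unfolding admissible_def using True assms by auto
  then show ?thesis unfolding Mc_def using True case_d[of "r-2" 0] by simp
next
  case False
  then have "\<not> admissible r i (r-2) (r-2)" unfolding admissible_def by auto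
  then show ?thesis unfolding Mc_def using False by simp
qed

lemma Mc1_sum: assumes "l \<le> r-2"
  shows "(\<Sum>j\<le>r-2. Mc 1 l j * f j) = (if Suc l \<le> r-2 then f (Suc l) else 0) - (if l \<ge> 1 then cn l * f (l-1) else 0)"
proof -
  have "(\<Sum>j\<le>r-2. Mc 1 l j * f j) = (\<Sum>j\<le>r-2. (if j = Suc l then f j else 0) + (if j = l - 1 \<and> l \<ge> 1 then - cn l * f j else 0))"
  proof (rule sum.cong)
    fix j assume "j \<in> {..r-2}"
    then show "Mc 1 l j * f j = (if j = Suc l then f j else 0) + (if j = l - 1 \<and> l \<ge> 1 then - cn l * f j else 0)"
      using Mc1[OF assms, of j] by auto
  qed simp
  also have "\<dots> = (if Suc l \<le> r-2 then f (Suc l) else 0) - (if l \<ge> 1 then cn l * f (l-1) else 0)"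
    using assms by (auto simp: sum.distrib sum.delta')
  finally show ?thesis .
qed

lemma Mc1_sum': assumes "m \<le> r-2"
  shows "(\<Sum>k\<le>r-2. f k * Mc 1 k m) = (if m \<ge> 1 then f (m-1) else 0) - (if Suc m \<le> r-2 then cn (Suc m) * f (Suc m) else 0)"
proof -
  have "(\<Sum>k\<le>r-2. f k * Mc 1 k m) = (\<Sum>k\<le>r-2. (if k = m - 1 \<and> m \<ge> 1 then f k else 0) + (if k = Suc m then - cn (Suc m) * f k else 0))"
  proof (rule sum.cong)
    fix k assume "k \<in> {..r-2}"
    then show "f k * Mc 1 k m = (if k = m - 1 \<and> m \<ge> 1 then f k else 0) + (if k = Suc m then - cn (Suc m) * f k else 0)"
      using Mc1[OF _ assms, of k] by auto
  qed simp
  also have "\<dots> = (if m \<ge> 1 then f (m-1) else 0) - (if Suc m \<le> r-2 then cn (Suc m) * f (Suc m) else 0)"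
    using assms by (auto simp: sum.distrib sum.delta')
  finally show ?thesis .
qed

lemma FT: assumes "i \<le> r-2" "l \<le> r-2" "m \<le> r-2"
  shows "(if Suc l \<le> r-2 then Mc i (Suc l) m else 0) - (if l \<ge> 1 then cn l * Mc i (l-1) m else 0)
       = (if m \<ge> 1 then Mc i l (m-1) else 0) - (if Suc m \<le> r-2 then cn (Suc m) * Mc i l (Suc m) else 0)"
proof (cases "even (i+l+m)")
  case True
  then show ?thesis by (auto simp: Mc_par)
next
  case False
  define u where "u = (int l + 1 + int m - int i) div 2"
  define v where "v = (int i + int m - int l - 1) div 2"
  define w where "w = (int i + int l + 1 - int m) div 2"
  have uvw: "int i = v + w" "int l = u + w - 1" "int m = u + v"
    using False unfolding u_def v_def w_def by presburger+
  have T1: "(if Suc l \<le> r-2 then Mc i (Suc l) m else 0) = Mz u v w"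
  proof (cases "Suc l \<le> r-2")
    case True then show ?thesis using Mc_Mz[of i v w "Suc l" u m] uvw by simp
  next
    case False
    have "Mz u v w = 0" by (rule Mz0) (use False uvw assms in linarith)
    then show ?thesis using False by simp
  qed
  have T2: "(if l \<ge> 1 then cn l * Mc i (l-1) m else 0) = cz (u+w-1) * Mz (u-1) (v+1) (w-1)"
  proof (cases "l \<ge> 1")
    case True
    have "Mc i (l-1) m = Mz (u-1) (v+1) (w-1)" using Mc_Mz[of i "v+1" "w-1" "l-1" "u-1" m] uvw True by simp
    moreover have "u+w-1 = int l" using uvw by simp
    then have "cn l = cz (u+w-1)" by (simp only: cz_nat cn_def)
    ultimately show ?thesis using True by simp
  next
    case False have "Mz (u-1) (v+1) (w-1) = 0" by (rule Mz0) (use False uvw in linarith)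
    then show ?thesis using False by simp
  qed
  have T3: "(if m \<ge> 1 then Mc i l (m-1) else 0) = Mz (u-1) v w"
  proof (cases "m \<ge> 1")
    case True then show ?thesis using Mc_Mz[of i v w l "u-1" "m-1"] uvw by simp
  next
    case False
    have "Mz (u-1) v w = 0" by (rule Mz0) (use False uvw in linarith)
    then show ?thesis using False by simp
  qed
  have T4: "(if Suc m \<le> r-2 then cn (Suc m) * Mc i l (Suc m) else 0) = cz (u+v+1) * Mz u (v+1) (w-1)"
  proof (cases "Suc m \<le> r-2")
    case True
    have "Mc i l (Suc m) = Mz u (v+1) (w-1)" using Mc_Mz[of i "v+1" "w-1" l u "Suc m"] uvw by simp
    moreover have "u+v+1 = int (Suc m)" using uvw by simp
    then have "cn (Suc m) = cz (u+v+1)" by (simp only: cz_nat cn_def)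
    ultimately show ?thesis using True by simp
  next
    case False have "Mz u (v+1) (w-1) = 0" by (rule Mz0) (use False uvw assms in linarith)
    then show ?thesis using False by simp
  qed
  have "0 \<le> v+w" "v+w \<le> int r - 2" "1 \<le> u+w" "u+w-1 \<le> int r - 2" "0 \<le> u+v" "u+v \<le> int r - 2"
    using uvw assms r3 by linarith+
  note ee = EE[OF this]
  show ?thesis unfolding T1 T2 T3 T4 using ee .
qed

lemma AS1: assumes "i \<le> r-2" "l \<le> r-2" "m \<le> r-2"
  shows "(\<Sum>j\<le>r-2. Mc 1 l j * Mc i j m) = (\<Sum>k\<le>r-2. Mc i l k * Mc 1 k m)"
  using FT[OF assms] Mc1_sum[OF assms(2), of "\<lambda>j. Mc i j m"] Mc1_sum'[OF assms(3), of "\<lambda>k. Mc i l k"]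
  by simp

end


definition exv :: "nat \<Rightarrow> nat \<Rightarrow> nat \<Rightarrow> nat" where
  "exv r s n = (if eps r s n = 1 then 0 else 1)"

lemma neg1_eq_iff: "((-1::real) ^ a = (-1) ^ b) \<longleftrightarrow> even (a + b)"
  by (cases "even a"; cases "even b") auto

lemma sgn_neg1_pow: "sgn ((-1::real) ^ n) = (-1) ^ n"
  by (cases "even n") auto

lemma div_neg1: "x / (-1::rat) ^ m = x * (-1) ^ m"
  by (cases "even m") auto

lemma sgn_add_same: fixes a b :: real
  shows "a \<noteq> 0 \<Longrightarrow> sgn a = sgn b \<Longrightarrow> sgn (a + b) = sgn a"
  by (cases "a > 0") (auto simp: sgn_if split: if_splits)

locale VQ =
  fixes r s :: nat
  assumes r3: "3 \<le> r" and oddr: "odd r" and odds: "odd s" and cop: "coprime r s"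
    and spos: "0 < s" and slt: "s < r"
begin

lemma qr_nz': "1 \<le> n \<Longrightarrow> n \<le> r - 1 \<Longrightarrow> qr r s n \<noteq> 0"
  using qr_nz[of r s n] r3 cop by simp

lemma sgn_qr: "1 \<le> n \<Longrightarrow> n \<le> r - 1 \<Longrightarrow> sgn (qr r s n) = (-1) ^ exv r s n"
  using qr_nz'[of n] unfolding exv_def eps_qr by (auto simp: sgn_if)

lemma eps_pm: "1 \<le> n \<Longrightarrow> n \<le> r - 1 \<Longrightarrow> eps r s n = (-1) ^ exv r s n"
  using qr_nz'[of n] unfolding exv_def eps_qr by auto

lemma eps_sq: "1 \<le> n \<Longrightarrow> n \<le> r - 1 \<Longrightarrow> eps r s n * eps r s n = 1"
  using eps_pm[of n] by (simp add: power_mult_distrib[symmetric] power_add[symmetric] flip: mult_2)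

lemma eps_sym: "1 \<le> n \<Longrightarrow> n \<le> r - 1 \<Longrightarrow> eps r s (r - n) = eps r s n"
  unfolding eps_qr using qr_sym[of r s n] r3 odds by simp

lemma eps1: "eps r s 1 = 1"
  unfolding eps_qr using qr_1[of r s] r3 cop by simp

sublocale signs r "exv r s"
proof
  show "3 \<le> r" "odd r" by (fact r3, fact oddr)
  show "exv r s 1 = 0" unfolding exv_def using eps1 by simp
  show "exv r s (r - n) = exv r s n" if "1 \<le> n" "n \<le> r - 1" for n
    unfolding exv_def using eps_sym[OF that] by simp
  fix x y z :: nat
  assume xyz: "1\<le>x" "1\<le>y" "1\<le>z" "x+y+z \<le> r-1"
    and h: "even (exv r s x + exv r s y + exv r s z + exv r s (x+y+z))"
  let ?e = "exv r s"
  have s1: "sgn (qr r s x * qr r s (x+y+z)) = (-1) ^ (?e x + ?e (x+y+z))"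
    using xyz by (simp add: sgn_mult sgn_qr power_add)
  have s2: "sgn (qr r s y * qr r s z) = (-1) ^ (?e y + ?e z)"
    using xyz by (simp add: sgn_mult sgn_qr power_add)
  have s3: "sgn (qr r s (x+y) * qr r s (x+z)) = (-1) ^ (?e (x+y) + ?e (x+z))"
    using xyz by (simp add: sgn_mult sgn_qr power_add)
  have "(-1::real) ^ (?e x + ?e (x+y+z)) = (-1) ^ (?e y + ?e z)"
    unfolding neg1_eq_iff using h by presburger
  then have "sgn (qr r s x * qr r s (x+y+z)) = sgn (qr r s y * qr r s z)" using s1 s2 by simp
  moreover have "qr r s x * qr r s (x+y+z) \<noteq> 0" using xyz qr_nz' by simp
  ultimately have "sgn (qr r s (x+y) * qr r s (x+z)) = sgn (qr r s x * qr r s (x+y+z))"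
    unfolding qr_ptolemy using sgn_add_same by metis
  then have "(-1::real) ^ (?e (x+y) + ?e (x+z)) = (-1) ^ (?e x + ?e (x+y+z))" using s1 s3 by simp
  then show "even (?e x + ?e (x+y) + ?e (x+z) + ?e (x+y+z))" unfolding neg1_eq_iff by presburger
qed

definition Qf :: "nat \<Rightarrow> real" where "Qf n = (\<Prod>k\<in>{1..n}. qr r s k)"

lemma qfact_real: "qfact r s n = complex_of_real (Qf n)"
  unfolding qfact_def Qf_def qint_real by simp

lemma sgn_Qf: "n \<le> r - 1 \<Longrightarrow> sgn (Qf n) = (-1) ^ F n"
proof (induction n)
  case 0 then show ?case by (simp add: Qf_def)
next
  case (Suc n)
  have "Qf (Suc n) = Qf n * qr r s (Suc n)" unfolding Qf_def by (simp add: prod.nat_ivl_Suc')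
  then show ?case using Suc sgn_qr[of "Suc n"] by (simp add: sgn_mult power_add)
qed

lemma Qf_nz: "n \<le> r - 1 \<Longrightarrow> Qf n \<noteq> 0"
  using sgn_Qf[of n] by (auto simp: sgn_if split: if_splits)

lemma etad_pm: "k \<le> r - 2 \<Longrightarrow> etad r s k = (-1) ^ (k + exv r s (Suc k))"
  unfolding etad_def using eps_pm[of "Suc k"] r3 by (simp add: power_add)

lemma omega_Mc: assumes "k \<le> r - 2" shows "omega r s i j k / etad r s k = Mc i j k"
proof (cases "admissible r i j k")
  case False then show ?thesis unfolding omega_def Mc_def by simp
next
  case True
  define a where "a = (j+k-i) div 2"
  define b where "b = (i+k-j) div 2"
  define c where "c = (i+j-k) div 2"
  have adm: "i \<le> j+k" "j \<le> i+k" "k \<le> i+j" "even (i+j+k)" "i+j+k \<le> 2*r-4"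
    using True unfolding admissible_def by auto
  have ev: "even (j+k-i)" "even (i+k-j)" "even (i+j-k)" using adm by presburger+
  have 2: "2*a = j+k-i" "2*b = i+k-j" "2*c = i+j-k"
    using ev unfolding a_def b_def c_def by simp_all
  have abc: "i = b + c" "j = a + c" "k = a + b" "a+b+c+1 \<le> r - 1"
    using 2 adm r3 by linarith+
  define T where "T = (-1) ^ (a + b + c) * Qf (a + b + c + 1) * Qf a * Qf b * Qf c / (Qf (a + b) * Qf (a + c) * Qf (b + c))"
  have th: "theta r s i j k = complex_of_real T"
    unfolding theta_def Let_def T_def a_def[symmetric] b_def[symmetric] c_def[symmetric] qfact_real by simp
  define N where "N = a+b+c + F (Suc (a+b+c)) + F a + F b + F c + F (a+b) + F (a+c) + F (b+c)"
  have sT: "sgn T = (-1) ^ N"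
  proof -
    have "sgn T = (-1) ^ (a+b+c) * (-1) ^ F (Suc (a+b+c)) * (-1) ^ F a * (-1) ^ F b * (-1) ^ F c /
        ((-1) ^ F (a+b) * (-1) ^ F (a+c) * (-1) ^ F (b+c))"
      unfolding T_def using abc
      by (simp add: sgn_mult sgn_divide sgn_neg1_pow sgn_Qf del: F.simps)
    also have "\<dots> = (-1) ^ N" unfolding N_def
      by (simp add: power_add field_simps del: F.simps)
    finally show ?thesis .
  qed
  have om: "omega r s i j k = (-1) ^ N"
  proof (cases "even N")
    case True then have "T > 0" using sT by (auto simp: sgn_if split: if_splits)
    then show ?thesis unfolding omega_def using True \<open>admissible r i j k\<close> th by simp
  next
    case False then have "T < 0" using sT by (auto simp: sgn_if split: if_splits)
    then show ?thesis unfolding omega_def using False \<open>admissible r i j k\<close> th by simp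
  qed
  have EN: "E a b c = N + (k + exv r s (Suc k))" unfolding E_def N_def abc by simp
  have "omega r s i j k / etad r s k = (-1) ^ E a b c"
    unfolding om etad_pm[OF assms] div_neg1 EN power_add[symmetric] ..
  then show ?thesis unfolding Mc_def a_def[symmetric] b_def[symmetric] c_def[symmetric]
    using True by simp
qed

end


lemma map_poly_int_add: "map_poly (of_int :: int \<Rightarrow> 'a::ring_1) (p + q) = map_poly of_int p + map_poly of_int q"
  by (intro poly_eqI) (simp add: coeff_map_poly)

lemma map_poly_int_mult: "map_poly (of_int :: int \<Rightarrow> 'a::comm_ring_1) (p * q) = map_poly of_int p * map_poly of_int q"
proof (induction p)
  case 0 then show ?case by simp
next
  case (pCons a p)
  have "pCons a p * q = smult a q + pCons 0 (p * q)" by simp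
  then show ?case using pCons by (simp add: map_poly_int_add map_poly_smult map_poly_pCons)
qed

lemma map_poly_rat_add: "map_poly (of_rat :: rat \<Rightarrow> 'a::field_char_0) (p + q) = map_poly of_rat p + map_poly of_rat q"
  by (intro poly_eqI) (simp add: coeff_map_poly of_rat_add)

lemma map_poly_rat_mult: "map_poly (of_rat :: rat \<Rightarrow> 'a::field_char_0) (p * q) = map_poly of_rat p * map_poly of_rat q"
proof (induction p)
  case 0 then show ?case by simp
next
  case (pCons a p)
  have "pCons a p * q = smult a q + pCons 0 (p * q)" by simp
  then show ?case using pCons by (simp add: map_poly_rat_add map_poly_smult map_poly_pCons of_rat_mult)
qed

context VQ begin

abbreviation "L \<equiv> vmult r s (ebas 1)"

lemma vmult_expl: "vmult r s x y k = (if k \<le> r-2 then (\<Sum>i\<le>r-2. \<Sum>j\<le>r-2. x i * y j * Mc i j k) else 0)"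
proof (cases "k \<le> r-2")
  case True
  have "omega3 r s x y (ebas k) = (\<Sum>i\<le>r-2. \<Sum>j\<le>r-2. x i * y j * omega r s i j k)"
    unfolding omega3_def ebas_def using True
    by (simp add: if_distrib if_distribR sum.delta cong: if_cong)
  then have "omega3 r s x y (ebas k) / etad r s k = (\<Sum>i\<le>r-2. \<Sum>j\<le>r-2. x i * y j * (omega r s i j k / etad r s k))"
    by (simp add: sum_divide_distrib)
  then show ?thesis unfolding vmult_def using True omega_Mc[OF True] by simp
next
  case False then show ?thesis unfolding vmult_def by simp
qed

lemma L_expl: "L y k = (if k \<le> r-2 then (\<Sum>j\<le>r-2. y j * Mc 1 j k) else 0)"
proof -
  have "1 \<le> r - 2" using r3 by simp
  have "(\<Sum>i\<le>r-2. \<Sum>j\<le>r-2. ebas 1 i * y j * Mc i j k) = (\<Sum>i\<le>r-2. if i = 1 then (\<Sum>j\<le>r-2. y j * Mc 1 j k) else 0)"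
    by (rule sum.cong) (auto simp: ebas_def)
  also have "\<dots> = (\<Sum>j\<le>r-2. y j * Mc 1 j k)" using \<open>1 \<le> r - 2\<close> by (simp add: sum.delta)
  finally show ?thesis unfolding vmult_expl by simp
qed

lemma L_expl2: "L y k = (if k \<le> r-2 then (if k \<ge> 1 then y (k-1) else 0) - (if Suc k \<le> r-2 then cn (Suc k) * y (Suc k) else 0) else 0)"
  unfolding L_expl using Mc1_sum'[of k y] by simp

lemma vmult_Vq: "vmult r s x y \<in> Vq r"
  unfolding Vq_def vmult_def by simp

lemma ebas_Vq: "k \<le> r - 2 \<Longrightarrow> ebas k \<in> Vq r"
  unfolding Vq_def ebas_def by simp

lemma right_unit: assumes "x \<in> Vq r" shows "vmult r s x (ebas 0) = x"
proof
  fix k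
  show "vmult r s x (ebas 0) k = x k"
  proof (cases "k \<le> r-2")
    case True
    have "vmult r s x (ebas 0) k = (\<Sum>i\<le>r-2. x i * Mc i 0 k)"
      unfolding vmult_expl ebas_def using True
      by (simp add: if_distrib if_distribR sum.delta cong: if_cong)
    also have "\<dots> = (\<Sum>i\<le>r-2. if i = k then x i else 0)"
      by (rule sum.cong) (use True in \<open>auto simp: Mc_i0\<close>)
    also have "\<dots> = x k" using True by simp
    finally show ?thesis .
  next
    case False then show ?thesis using assms unfolding Vq_def vmult_expl by simp
  qed
qed

lemma swap3: fixes a :: rat
  shows "(\<Sum>j\<in>J. a * (\<Sum>l\<in>K. b l * A l j) * B j) = (\<Sum>l\<in>K. a * b l * (\<Sum>j\<in>J. A l j * B j))"
proof -
  have "(\<Sum>j\<in>J. a * (\<Sum>l\<in>K. b l * A l j) * B j) = (\<Sum>j\<in>J. \<Sum>l\<in>K. a * b l * (A l j * B j))"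
    by (simp add: sum_distrib_left sum_distrib_right mult_ac)
  also have "\<dots> = (\<Sum>l\<in>K. \<Sum>j\<in>J. a * b l * (A l j * B j))" by (rule sum.swap)
  also have "\<dots> = (\<Sum>l\<in>K. a * b l * (\<Sum>j\<in>J. A l j * B j))" by (simp add: sum_distrib_left)
  finally show ?thesis .
qed

lemma swap4: fixes a :: "nat \<Rightarrow> rat"
  shows "(\<Sum>i\<in>I. \<Sum>l\<in>K. a i * b l * (\<Sum>k\<in>J. C i l k * D k)) = (\<Sum>k\<in>J. (\<Sum>i\<in>I. \<Sum>l\<in>K. a i * b l * C i l k) * D k)"
proof -
  have "(\<Sum>i\<in>I. \<Sum>l\<in>K. a i * b l * (\<Sum>k\<in>J. C i l k * D k)) = (\<Sum>i\<in>I. \<Sum>k\<in>J. \<Sum>l\<in>K. a i * b l * C i l k * D k)"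
    by (rule sum.cong[OF refl]) (simp add: sum_distrib_left mult_ac sum.swap[of _ K])
  also have "\<dots> = (\<Sum>k\<in>J. \<Sum>i\<in>I. \<Sum>l\<in>K. a i * b l * C i l k * D k)" by (rule sum.swap)
  also have "\<dots> = (\<Sum>k\<in>J. (\<Sum>i\<in>I. \<Sum>l\<in>K. a i * b l * C i l k) * D k)" by (simp add: sum_distrib_right)
  finally show ?thesis .
qed

lemma assoc1: "vmult r s x (L y) = L (vmult r s x y)"
proof
  fix m
  show "vmult r s x (L y) m = L (vmult r s x y) m"
  proof (cases "m \<le> r-2")
    case True
    have "vmult r s x (L y) m = (\<Sum>i\<le>r-2. \<Sum>j\<le>r-2. x i * (\<Sum>l\<le>r-2. y l * Mc 1 l j) * Mc i j m)"
      unfolding vmult_expl[of x] using True by (simp, intro sum.cong refl) (simp add: L_expl[simplified])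
    also have "\<dots> = (\<Sum>i\<le>r-2. \<Sum>l\<le>r-2. x i * y l * (\<Sum>j\<le>r-2. Mc 1 l j * Mc i j m))"
      by (rule sum.cong[OF refl]) (rule swap3)
    also have "\<dots> = (\<Sum>i\<le>r-2. \<Sum>l\<le>r-2. x i * y l * (\<Sum>k\<le>r-2. Mc i l k * Mc 1 k m))"
      using True by (intro sum.cong refl) (simp add: AS1[simplified])
    also have "\<dots> = (\<Sum>k\<le>r-2. (\<Sum>i\<le>r-2. \<Sum>l\<le>r-2. x i * y l * Mc i l k) * Mc 1 k m)"
      by (rule swap4)
    also have "\<dots> = L (vmult r s x y) m"
      unfolding L_expl using True by (simp add: vmult_expl)
    finally show ?thesis .
  next
    case False then show ?thesis unfolding vmult_expl by simp
  qed
qed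

lemma vmult_lin2: "vmult r s x (\<lambda>k. a * y k + z k) = (\<lambda>k. a * vmult r s x y k + vmult r s x z k)"
  unfolding vmult_expl
  by (auto simp: algebra_simps sum.distrib sum_distrib_left)

lemma vmult_zero1: "vmult r s (\<lambda>_. 0) y = (\<lambda>_. 0)"
  unfolding vmult_expl by auto

lemma vmult_zero2: "vmult r s x (\<lambda>_. 0) = (\<lambda>_. 0)"
  unfolding vmult_expl by auto

lemma L_sum: "L (\<lambda>k. \<Sum>i\<in>A. c i * v i k) = (\<lambda>k. \<Sum>i\<in>A. c i * L (v i) k)"
  unfolding L_expl
  by (auto simp: sum_distrib_left sum_distrib_right mult.assoc sum.swap[of _ A] intro!: ext)


abbreviation "vp \<equiv> vpow r s (ebas 1)"

lemma vp_Vq: "vp n \<in> Vq r"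
  by (cases n) (auto simp: ebas_Vq vmult_Vq)

lemma veval_N: assumes "degree f \<le> N" shows "veval r s f = (\<lambda>k. \<Sum>i\<le>N. coeff f i * vp i k)"
proof
  fix k
  have "(\<Sum>i\<le>N. coeff f i * vp i k) = (\<Sum>i\<le>degree f. coeff f i * vp i k)"
  proof (rule sum.mono_neutral_right)
    show "\<forall>i\<in>{..N} - {..degree f}. coeff f i * vp i k = 0" by (auto simp: coeff_eq_0)
  qed (use assms in auto)
  then show "veval r s f k = (\<Sum>i\<le>N. coeff f i * vp i k)" unfolding veval_def by simp
qed

lemma veval_Vq: "veval r s f \<in> Vq r"
  using vp_Vq unfolding veval_def Vq_def by simp

lemma veval_add: "veval r s (f + g) = (\<lambda>k. veval r s f k + veval r s g k)"
proof -
  define N where "N = max (degree f) (degree g)"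
  have "degree (f+g) \<le> N" "degree f \<le> N" "degree g \<le> N" unfolding N_def
    by (auto intro: degree_add_le)
  then show ?thesis by (simp add: veval_N algebra_simps sum.distrib)
qed

lemma veval_smult: "veval r s (smult c f) = (\<lambda>k. c * veval r s f k)"
proof -
  have "degree (smult c f) \<le> degree f" by simp
  then show ?thesis by (simp add: veval_N[of _ "degree f"] sum_distrib_left mult.assoc)
qed

lemma veval_0: "veval r s 0 = (\<lambda>_. 0)"
  unfolding veval_def by simp

lemma veval_pCons: "veval r s (pCons a p) = (\<lambda>k. a * ebas 0 k + L (veval r s p) k)"
proof -
  have d: "degree (pCons a p) \<le> Suc (degree p)" by (simp add: degree_pCons_le)
  have "veval r s (pCons a p) = (\<lambda>k. \<Sum>i\<le>Suc (degree p). coeff (pCons a p) i * vp i k)"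
    by (rule veval_N[OF d])
  also have "\<dots> = (\<lambda>k. a * ebas 0 k + (\<Sum>i\<le>degree p. coeff p i * L (vp i) k))"
    by (simp add: sum.atMost_Suc_shift del: sum.atMost_Suc)
  also have "\<dots> = (\<lambda>k. a * ebas 0 k + L (veval r s p) k)"
    unfolding veval_N[OF order_refl] L_sum by simp
  finally show ?thesis .
qed

lemma veval_mult: "veval r s (f * g) = vmult r s (veval r s f) (veval r s g)"
proof (induction g rule: pCons_induct)
  case 0
  then show ?case by (simp add: veval_0 vmult_zero2)
next
  case (pCons a q)
  have "f * pCons a q = smult a f + pCons 0 (f * q)" by (simp add: mult_pCons_right)
  then have "veval r s (f * pCons a q) = (\<lambda>k. a * veval r s f k + L (veval r s (f * q)) k)"
    by (simp add: veval_add veval_smult veval_pCons)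
  also have "\<dots> = (\<lambda>k. a * vmult r s (veval r s f) (ebas 0) k + vmult r s (veval r s f) (L (veval r s q)) k)"
    by (simp add: right_unit[OF veval_Vq] assoc1[simplified] pCons.IH)
  also have "\<dots> = vmult r s (veval r s f) (\<lambda>k. a * ebas 0 k + L (veval r s q) k)"
    by (simp add: vmult_lin2)
  also have "\<dots> = vmult r s (veval r s f) (veval r s (pCons a q))"
    by (simp add: veval_pCons)
  finally show ?case .
qed

lemma veval_1: "veval r s 1 = ebas 0"
  unfolding veval_def by simp


abbreviation "Pq k \<equiv> (map_poly of_int (Ppoly r s k) :: rat poly)"

lemma Pq_rec: "Pq (Suc (Suc n)) = [:0,1:] * Pq (Suc n) + smult (of_int (eps r s (Suc n) * eps r s (Suc (Suc n)))) (Pq n)"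
  by (simp add: map_poly_int_add map_poly_int_mult map_poly_smult map_poly_pCons)

end


lemma Ppoly_deg: "degree (Ppoly r s n) = n \<and> coeff (Ppoly r s n) n = 1"
proof (induction r s n rule: Ppoly.induct)
  case (1 r s) then show ?case by simp
next
  case (2 r s) then show ?case by simp
next
  case (3 r s n)
  let ?A = "Ppoly r s (Suc n)" and ?B = "Ppoly r s n" and ?c = "eps r s (Suc n) * eps r s (Suc (Suc n))"
  have A0: "?A \<noteq> 0" using 3 by (metis coeff_0 zero_neq_one)
  have XA: "[:0, 1:] * ?A = pCons 0 ?A" by simp
  have dXA: "degree ([:0, 1:] * ?A) = Suc (Suc n)" using 3 A0 XA by simp
  have dB: "degree (smult ?c ?B) < Suc (Suc n)" using 3 by (simp add: degree_smult_le le_less_trans)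
  have "degree (Ppoly r s (Suc (Suc n))) = Suc (Suc n)"
    using degree_add_eq_left[OF dB[folded dXA]] dXA by (simp add: add.commute)
  moreover have "coeff (Ppoly r s (Suc (Suc n))) (Suc (Suc n)) = 1"
    using 3 dB by (simp add: XA coeff_eq_0)
  ultimately show ?case by simp
qed

lemma Ppoly_nz: "Ppoly r s n \<noteq> 0"
  using Ppoly_deg[of r s n] by (metis coeff_0 zero_neq_one)

lemma of_int_fract: "(of_int k :: 'a::idom fract) = Fract (of_int k) 1"
proof (cases k rule: int_cases)
  case (nonneg n) then show ?thesis by (simp add: of_nat_fract)
next
  case (neg n) then show ?thesis by (simp add: of_nat_fract One_fract_def)
qed

context VQ begin

lemma Pbezout: "n \<le> r - 2 \<Longrightarrow> \<exists>u v. u * Ppoly r s n + v * Ppoly r s (Suc n) = 1"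
proof (induction n)
  case 0 then show ?case by (intro exI[of _ 1] exI[of _ 0]) simp
next
  case (Suc n)
  then obtain u v where uv: "u * Ppoly r s n + v * Ppoly r s (Suc n) = 1" by auto
  define c where "c = eps r s (Suc n) * eps r s (Suc (Suc n))"
  have cc: "c * c = 1" unfolding c_def using eps_sq[of "Suc n"] eps_sq[of "Suc (Suc n)"] Suc.prems
    by (simp add: algebra_simps)
  have rec: "Ppoly r s (Suc (Suc n)) = [:0,1:] * Ppoly r s (Suc n) + smult c (Ppoly r s n)"
    unfolding c_def by simp
  have "(v - smult c ([:0,1:] * u)) * Ppoly r s (Suc n) + smult c u * Ppoly r s (Suc (Suc n)) = 1"
    unfolding rec using uv cc by (simp add: algebra_simps)
  then show ?case by blast
qed

lemma Pcoprime: "n \<le> r - 2 \<Longrightarrow> coprime (Ppoly r s n) (Ppoly r s (Suc n))"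
proof -
  assume "n \<le> r - 2"
  then obtain u v where uv: "u * Ppoly r s n + v * Ppoly r s (Suc n) = 1" using Pbezout by blast
  show ?thesis
  proof (rule coprimeI)
    fix d assume "d dvd Ppoly r s n" "d dvd Ppoly r s (Suc n)"
    then have "d dvd u * Ppoly r s n + v * Ppoly r s (Suc n)" by simp
    then show "is_unit d" using uv by simp
  qed
qed

lemma cfrac_eq: "m \<le> r - 2 \<Longrightarrow> cfrac r s m = Fract (Ppoly r s (Suc m)) (Ppoly r s m)"
proof (induction m)
  case 0 then show ?case by simp
next
  case (Suc m)
  define c where "c = eps r s (Suc m) * eps r s (Suc (Suc m))"
  have "eps r s (r - 2 - m) = eps r s (Suc (Suc m))" "eps r s (r - 1 - m) = eps r s (Suc m)"
    using eps_sym[of "Suc (Suc m)"] eps_sym[of "Suc m"] Suc.prems by (simp_all add: numeral_eq_Suc)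
  then have cs: "eps r s (r - 2 - m) * eps r s (r - 1 - m) = c" unfolding c_def by simp
  have "cfrac r s (Suc m) = Fract [:0, 1:] 1 + of_int c / cfrac r s m"
    by (simp only: cfrac.simps cs)
  also have "\<dots> = Fract [:0, 1:] 1 + Fract [:c:] 1 / Fract (Ppoly r s (Suc m)) (Ppoly r s m)"
    using Suc by (simp add: of_int_fract of_int_poly)
  also have "\<dots> = Fract ([:0,1:] * Ppoly r s (Suc m) + smult c (Ppoly r s m)) (Ppoly r s (Suc m))"
    using Ppoly_nz by (simp add: algebra_simps)
  also have "\<dots> = Fract (Ppoly r s (Suc (Suc m))) (Ppoly r s (Suc m))" unfolding c_def by simp
  finally show ?case .
qed


definition Phi :: "nat \<Rightarrow> int" where "Phi n = (\<Prod>k\<in>{1..n}. eps r s k)"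

lemma Phi_Suc: "Phi (Suc n) = Phi n * eps r s (Suc n)"
  unfolding Phi_def by (simp add: prod.nat_ivl_Suc')

lemma Phi_F: "n \<le> r - 1 \<Longrightarrow> Phi n = (-1) ^ F n"
proof (induction n)
  case 0 then show ?case by (simp add: Phi_def)
next
  case (Suc n) then show ?case using eps_pm[of "Suc n"] by (simp add: Phi_Suc power_add)
qed

lemma F_even: "even (F (r - 1))"
proof -
  define h where "h = (r - 1) div 2"
  have r: "r = 2*h + 1" unfolding h_def using oddr r3 by presburger
  have "m \<le> h \<Longrightarrow> even (F (h+m) + F (h-m))" for m
  proof (induction m)
    case 0 then show ?case by simp
  next
    case (Suc m)
    have "h - m = Suc (h - Suc m)" using Suc.prems by simp
    then have 1: "F (h - m) = F (h - Suc m) + exv r s (h - m)" by simp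
    have 2: "F (h + Suc m) = F (h + m) + exv r s (Suc (h+m))" by simp
    have "exv r s (r - (h - m)) = exv r s (h - m)" using Suc.prems r by (intro exsym) auto
    moreover have "r - (h - m) = Suc (h+m)" using Suc.prems r by simp
    ultimately have "exv r s (Suc (h+m)) = exv r s (h - m)" by simp
    then have eq: "F (h + Suc m) + F (h - Suc m) = F (h+m) + F (h-m)" using 1 2 by simp
    have "even (F (h+m) + F (h-m))" using Suc by simp
    then show ?case unfolding eq .
  qed
  from this[of h] have "even (F (2*h))" by (simp add: mult_2)
  then show ?thesis using r by simp
qed

lemma Phi_top: "Phi (r - 1) = 1"
  using Phi_F[of "r-1"] F_even by simp

lemma riley_alg:
  fixes A B :: "int poly"
  assumes "e*e = 1" "f*f = 1"
  shows "smult f ([:0,1:] * smult (g*e) A) + smult g B = smult (g*e*f) ([:0,1:]*A + smult (e*f) B)"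
proof -
  have h1: "e*(e*x) = x" for x using assms(1) by (metis mult.assoc mult_1)
  have h2: "f*(f*x) = x" for x using assms(2) by (metis mult.assoc mult_1)
  show ?thesis by (simp add: smult_add_right algebra_simps h1 h2)
qed

abbreviation "X2 \<equiv> [:0, 0, 1::int:]"

definition ralpha where "ralpha n = fst (rileyProd r s n)"
definition rbeta where "rbeta n = fst (snd (rileyProd r s n))"

lemma riley_step: "ralpha (Suc n) = (if odd (Suc n) then ralpha n else ralpha n + rbeta n * [:0, of_int (eps r s (Suc n)):])
  \<and> rbeta (Suc n) = (if odd (Suc n) then ralpha n * [:of_int (eps r s (Suc n)):] + rbeta n else rbeta n)"
  unfolding ralpha_def rbeta_def
  by (cases "rileyProd r s n") (simp add: rileyA_def)

lemma riley_inv: "1 \<le> n \<Longrightarrow> n \<le> r - 1 \<Longrightarrow>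
  (if even n then pcompose (ralpha n) X2 = smult (Phi n) (Ppoly r s n) \<and> [:0,1:] * pcompose (rbeta n) X2 = smult (Phi (n-1)) (Ppoly r s (n-1))
   else [:0,1:] * pcompose (rbeta n) X2 = smult (Phi n) (Ppoly r s n) \<and> pcompose (ralpha n) X2 = smult (Phi (n-1)) (Ppoly r s (n-1)))"
proof (induction n rule: nat_induct_at_least)
  case base
  have "ralpha 1 = 1" "rbeta 1 = [:of_int (eps r s 1):]"
    unfolding ralpha_def rbeta_def by (simp_all add: rileyA_def)
  moreover have "pcompose (1::int poly) X2 = 1" by (rule pcompose_1)
  ultimately show ?case using eps1 by (simp add: Phi_def)
next
  case (Suc n)
  then have IH: "(if even n then pcompose (ralpha n) X2 = smult (Phi n) (Ppoly r s n) \<and> [:0,1:] * pcompose (rbeta n) X2 = smult (Phi (n-1)) (Ppoly r s (n-1))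
   else [:0,1:] * pcompose (rbeta n) X2 = smult (Phi n) (Ppoly r s n) \<and> pcompose (ralpha n) X2 = smult (Phi (n-1)) (Ppoly r s (n-1)))" by simp
  define e where "e = eps r s n"
  define f where "f = eps r s (Suc n)"
  have ee: "e * e = 1" unfolding e_def using eps_sq[of n] Suc by simp
  have ff: "f * f = 1" unfolding f_def using eps_sq[of "Suc n"] Suc by simp
  have Phin: "Phi n = Phi (n-1) * e" unfolding e_def using Phi_Suc[of "n-1"] Suc by simp
  have PhiSn: "Phi (Suc n) = Phi (n-1) * e * f" unfolding f_def using Phi_Suc[of n] Phin by simp
  have rec: "Ppoly r s (Suc n) = [:0,1:] * Ppoly r s n + smult (e*f) (Ppoly r s (n-1))"
    unfolding e_def f_def using Suc by (cases n) auto
  have key: "smult f ([:0,1:] * smult (Phi (n-1) * e) (Ppoly r s n)) + smult (Phi (n-1)) (Ppoly r s (n-1))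
     = smult (Phi (Suc n)) (Ppoly r s (Suc n))"
    unfolding rec PhiSn by (rule riley_alg[OF ee ff])
  show ?case
  proof (cases "even n")
    case True
    then have o: "odd (Suc n)" by simp
    have a: "ralpha (Suc n) = ralpha n" and b: "rbeta (Suc n) = ralpha n * [:f:] + rbeta n"
      using riley_step[of n] o unfolding f_def by auto
    have "[:0,1:] * pcompose (rbeta (Suc n)) X2 = smult f ([:0,1:] * pcompose (ralpha n) X2) + [:0,1:] * pcompose (rbeta n) X2"
      unfolding b by (simp add: pcompose_add pcompose_mult pcompose_smult algebra_simps)
    also have "\<dots> = smult (Phi (Suc n)) (Ppoly r s (Suc n))"
      using IH True key Phin by simp
    finally show ?thesis using o a IH True by simp
  next
    case False
    then have o: "even (Suc n)" by simp
    have a: "ralpha (Suc n) = ralpha n + rbeta n * [:0, f:]" and b: "rbeta (Suc n) = rbeta n"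
      using riley_step[of n] o unfolding f_def by auto
    have X: "pcompose [:0, f:] X2 = smult f ([:0,1:] * [:0,1:])" by (simp add: pcompose_pCons)
    have "pcompose (ralpha (Suc n)) X2 = pcompose (ralpha n) X2 + smult f ([:0,1:] * ([:0,1:] * pcompose (rbeta n) X2))"
      unfolding a by (simp add: pcompose_add pcompose_mult pcompose_pCons pcompose_smult X algebra_simps)
    also have "\<dots> = smult (Phi (Suc n)) (Ppoly r s (Suc n))"
      using IH False key Phin by (simp add: add.commute)
    finally show ?thesis using o b IH False by simp
  qed
qed

lemma riley_thm: "Ppoly r s (r - 1) = pcompose (riley r s) X2"
proof -
  have "even (r - 1)" using oddr by simp
  then have "pcompose (ralpha (r-1)) X2 = smult (Phi (r-1)) (Ppoly r s (r-1))"
    using riley_inv[of "r-1"] r3 by simp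
  then show ?thesis unfolding riley_def ralpha_def[symmetric] Phi_top by simp
qed

end


context VQ begin

lemma veval_X: "veval r s ([:0,1:] * g) = L (veval r s g)"
proof -
  have "[:0,1:] * g = pCons 0 g" by simp
  then show ?thesis by (simp add: veval_pCons)
qed

lemma L_ebas: assumes "j \<le> r-2"
  shows "L (ebas j) = (\<lambda>k. (if Suc j \<le> r-2 then ebas (Suc j) k else 0) - (if j \<ge> 1 then cn j * ebas (j-1) k else 0))"
proof
  fix k
  show "L (ebas j) k = (if Suc j \<le> r-2 then ebas (Suc j) k else 0) - (if j \<ge> 1 then cn j * ebas (j-1) k else 0)"
    unfolding L_expl2 using assms by (auto simp: ebas_def)
qed

lemma eps_cn: "1 \<le> n \<Longrightarrow> Suc n \<le> r - 1 \<Longrightarrow> (of_int (eps r s n * eps r s (Suc n)) :: rat) = cn n"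
  unfolding cn_def using eps_pm[of n] eps_pm[of "Suc n"] by (simp add: power_add)

lemma veval_Pq_aux: "Suc k \<le> r - 2 \<Longrightarrow> veval r s (Pq k) = ebas k \<and> veval r s (Pq (Suc k)) = ebas (Suc k)"
proof (induction k)
  case 0
  have "veval r s (Pq 1) = L (ebas 0)" using veval_X[of 1] by (simp add: veval_1 map_poly_pCons)
  also have "\<dots> = ebas 1" using L_ebas[of 0] 0 by (simp add: ebas_def)
  finally show ?case by (simp add: veval_1)
next
  case (Suc k)
  have c: "(of_int (eps r s (Suc k) * eps r s (Suc (Suc k))) :: rat) = cn (Suc k)"
    using eps_cn[of "Suc k"] Suc.prems by simp
  have "veval r s (Pq (Suc (Suc k))) = (\<lambda>i. L (veval r s (Pq (Suc k))) i + cn (Suc k) * veval r s (Pq k) i)"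
    by (simp only: Pq_rec veval_add veval_smult veval_X c)
  also have "\<dots> = (\<lambda>i. L (ebas (Suc k)) i + cn (Suc k) * ebas k i)"
    using Suc by simp
  also have "\<dots> = ebas (Suc (Suc k))"
    using L_ebas[of "Suc k"] Suc.prems by auto
  finally show ?case using Suc by simp
qed

lemma veval_Pq: "k \<le> r - 2 \<Longrightarrow> veval r s (Pq k) = ebas k"
proof (cases "k = r - 2")
  case True
  have e: "Suc (r-3) = r - 2" using r3 by simp
  have "Suc (r-3) \<le> r - 2" using r3 by simp
  from veval_Pq_aux[OF this] show ?thesis unfolding e True by simp
qed (use veval_Pq_aux[of k] in auto)

lemma veval_Ptop: "veval r s (Pq (r - 1)) = (\<lambda>_. 0)"
proof -
  have r1: "r - 1 = Suc (Suc (r - 3))" using r3 by simp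
  have e1: "Suc (r-3) = r - 2" and e2: "Suc (Suc (r-3)) = Suc (r-2)" using r3 by simp_all
  have c: "(of_int (eps r s (Suc (r-3)) * eps r s (Suc (Suc (r-3)))) :: rat) = cn (r-2)"
    unfolding e1 e2 by (rule eps_cn) (use r3 in auto)
  have r2: "Suc (r-3) = r - 2" using r3 by simp
  have "veval r s (Pq (r-1)) = (\<lambda>i. L (veval r s (Pq (Suc (r-3)))) i + cn (r-2) * veval r s (Pq (r-3)) i)"
    unfolding r1 by (simp only: Pq_rec veval_add veval_smult veval_X c)
  also have "\<dots> = (\<lambda>i. L (ebas (r-2)) i + cn (r-2) * ebas (r-3) i)"
    unfolding r2 using veval_Pq[of "r-3"] veval_Pq[of "r-2"] by simp
  also have "\<dots> = (\<lambda>_. 0)"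
    using L_ebas[of "r-2"] r3 by (auto simp: numeral_eq_Suc)
  finally show ?thesis .
qed


lemma vp_tri: "n \<le> r - 2 \<Longrightarrow> (\<forall>k. n < k \<longrightarrow> vp n k = 0) \<and> vp n n = 1"
proof (induction n)
  case 0 then show ?case by (simp add: ebas_def)
next
  case (Suc n)
  then have IH: "\<forall>k. n < k \<longrightarrow> vp n k = 0" "vp n n = 1" by auto
  have e: "vp (Suc n) = L (vp n)" by simp
  show ?case unfolding e L_expl2 using IH Suc.prems by auto
qed

lemma veval_low: assumes "degree f \<le> r - 2"
  shows "(\<forall>k. degree f < k \<longrightarrow> veval r s f k = 0) \<and> veval r s f (degree f) = lead_coeff f"
proof
  show "\<forall>k. degree f < k \<longrightarrow> veval r s f k = 0"
    unfolding veval_def using vp_tri assms by auto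
  have "veval r s f (degree f) = (\<Sum>i\<le>degree f. coeff f i * vp i (degree f))" unfolding veval_def by simp
  also have "\<dots> = coeff f (degree f) * vp (degree f) (degree f) + (\<Sum>i\<in>{..degree f} - {degree f}. coeff f i * vp i (degree f))"
    by (subst sum.remove[of _ "degree f"]) auto
  also have "(\<Sum>i\<in>{..degree f} - {degree f}. coeff f i * vp i (degree f)) = 0"
    using vp_tri assms by (intro sum.neutral) auto
  finally show "veval r s f (degree f) = lead_coeff f" using vp_tri assms by simp
qed

lemma veval_top: assumes "degree f \<le> r - 2" shows "veval r s f (r - 2) = coeff f (r - 2)"
proof (cases "degree f = r - 2")
  case True then show ?thesis using veval_low[OF assms] by simp
next
  case False
  then have "degree f < r - 2" using assms by simp
  then show ?thesis using veval_low[OF assms] by (simp add: coeff_eq_0)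
qed

lemma Pq_deg: "degree (Pq k) = k" and Pq_lead: "coeff (Pq k) k = 1"
proof -
  have "degree (Ppoly r s k) = k" "coeff (Ppoly r s k) k = 1" using Ppoly_deg by auto
  then show "degree (Pq k) = k" "coeff (Pq k) k = 1"
    by (simp_all add: map_poly_degree_eq coeff_map_poly)
qed

lemma Pq_nz: "Pq k \<noteq> 0" using Pq_lead[of k] by auto

lemma veval_mod: "veval r s f = veval r s (f mod Pq (r - 1))"
proof -
  have "f = Pq (r-1) * (f div Pq (r-1)) + f mod Pq (r-1)" by simp
  then have "veval r s f = (\<lambda>k. vmult r s (veval r s (Pq (r-1))) (veval r s (f div Pq (r-1))) k + veval r s (f mod Pq (r-1)) k)"
    by (metis veval_add veval_mult)
  also have "\<dots> = (\<lambda>k. 0 + veval r s (f mod Pq (r-1)) k)" unfolding veval_Ptop vmult_zero1 ..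
  finally show ?thesis by simp
qed

lemma deg_mod: "degree (f mod Pq (r - 1)) \<le> r - 2"
proof -
  have "f mod Pq (r-1) = 0 \<or> degree (f mod Pq (r-1)) < degree (Pq (r-1))"
    using degree_mod_less[OF Pq_nz] by blast
  then show ?thesis using Pq_deg[of "r-1"] r3 by auto
qed

lemma veval_kernel: "veval r s f = (\<lambda>_. 0) \<longleftrightarrow> Pq (r - 1) dvd f"
proof
  assume z: "veval r s f = (\<lambda>_. 0)"
  define h where "h = f mod Pq (r-1)"
  have "veval r s h = (\<lambda>_. 0)" using z veval_mod h_def by simp
  moreover have "degree h \<le> r - 2" unfolding h_def by (rule deg_mod)
  ultimately have "lead_coeff h = 0" using veval_low[of h] by simp
  then have "h = 0" by simp
  then show "Pq (r - 1) dvd f" unfolding h_def by (simp add: mod_eq_0_iff_dvd)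
next
  assume "Pq (r - 1) dvd f"
  then have "f mod Pq (r-1) = 0" by (simp add: mod_eq_0_iff_dvd)
  then show "veval r s f = (\<lambda>_. 0)" using veval_mod[of f] by (simp add: veval_0)
qed

lemma veval_const: "veval r s [:c:] = (\<lambda>k. c * ebas 0 k)"
  using veval_pCons[of c 0] by (simp add: veval_0 vmult_zero2)

lemma veval_sum_basis: "N \<le> r - 2 \<Longrightarrow> veval r s (\<Sum>k\<le>N. smult (v k) (Pq k)) = (\<lambda>j. \<Sum>k\<le>N. v k * ebas k j)"
proof (induction N)
  case 0 then show ?case by (simp add: veval_const)
next
  case (Suc N) then show ?case by (simp add: veval_add veval_smult veval_Pq)
qed

lemma veval_surj: "v \<in> Vq r \<Longrightarrow> \<exists>f. veval r s f = v"
proof -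
  assume v: "v \<in> Vq r"
  have "veval r s (\<Sum>k\<le>r-2. smult (v k) (Pq k)) = (\<lambda>j. \<Sum>k\<le>r-2. v k * ebas k j)"
    by (rule veval_sum_basis) simp
  also have "\<dots> = v"
  proof
    fix j show "(\<Sum>k\<le>r-2. v k * ebas k j) = v j"
      using v unfolding Vq_def ebas_def by (auto simp: if_distrib cong: if_cong)
  qed
  finally show ?thesis by blast
qed

lemma counit_formula: "counit r s (veval r s f) = coeff ((f * Pq (r - 2)) mod Pq (r - 1)) (r - 2)"
proof -
  have c: "counit r s x = x 0" for x
  proof -
    have "counit r s x = (\<Sum>i\<le>r-2. x i * ebas 0 i * etad r s i)" unfolding counit_def eta_def ..
    also have "\<dots> = x 0 * etad r s 0" by (simp add: ebas_def if_distrib if_distribR cong: if_cong)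
    also have "etad r s 0 = 1" unfolding etad_def using eps1 by simp
    finally show ?thesis by simp
  qed
  have "veval r s (f * Pq (r-2)) (r-2) = vmult r s (veval r s f) (ebas (r-2)) (r-2)"
    by (simp add: veval_mult veval_Pq)
  also have "\<dots> = (\<Sum>i\<le>r-2. veval r s f i * Mc i (r-2) (r-2))"
    unfolding vmult_expl by (simp add: ebas_def if_distrib if_distribR cong: if_cong)
  also have "\<dots> = (\<Sum>i\<le>r-2. if i = 0 then veval r s f i else 0)"
    by (rule sum.cong) (auto simp: Mc_top)
  also have "\<dots> = veval r s f 0" by simp
  finally have 1: "veval r s (f * Pq (r-2)) (r-2) = counit r s (veval r s f)" using c by simp
  have "veval r s (f * Pq (r-2)) (r-2) = veval r s ((f * Pq (r-2)) mod Pq (r-1)) (r-2)"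
    using veval_mod by metis
  also have "\<dots> = coeff ((f * Pq (r - 2)) mod Pq (r - 1)) (r - 2)" by (rule veval_top[OF deg_mod])
  finally show ?thesis using 1 by simp
qed

end


lemma poly_bound:
  fixes p :: "complex poly"
  assumes "degree p \<le> m" "1 \<le> norm z"
  shows "norm (poly p z) \<le> (\<Sum>i\<le>m. norm (coeff p i)) * norm z ^ m"
proof -
  have "poly p z = (\<Sum>i\<le>degree p. coeff p i * z ^ i)" by (rule poly_altdef)
  also have "\<dots> = (\<Sum>i\<le>m. coeff p i * z ^ i)"
    by (rule sum.mono_neutral_left) (use assms in \<open>auto simp: coeff_eq_0\<close>)
  finally have "norm (poly p z) \<le> (\<Sum>i\<le>m. norm (coeff p i) * norm z ^ i)"
    by (simp add: norm_mult norm_power sum_norm_le)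
  also have "\<dots> \<le> (\<Sum>i\<le>m. norm (coeff p i) * norm z ^ m)"
    by (intro sum_mono mult_left_mono power_increasing) (use assms in auto)
  finally show ?thesis by (simp add: sum_distrib_right)
qed

lemma degree_le_pred:
  fixes p :: "'a::zero poly"
  assumes "\<And>i. i \<ge> n \<Longrightarrow> coeff p i = 0"
  shows "degree p \<le> n - 1"
  by (rule degree_le) (use assms in auto)

theorem residue_sum:
  fixes P Q H :: "complex poly"
  assumes monic: "lead_coeff P = 1" and degH: "degree H < degree P"
  shows "(\<Sum>z\<in>{z. poly P z = 0}. residue (\<lambda>w. poly (P*Q + H) w / poly P w) z) = coeff H (degree P - 1)"
proof -
  define n where "n = degree P"
  define c where "c = coeff H (n - 1)"
  define S where "S = {z. poly P z = 0}"
  define f where "f = (\<lambda>w. poly (P*Q + H) w / poly P w)"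
  have P0: "P \<noteq> 0" using monic by auto
  have n1: "n \<ge> 1" using degH n_def by simp
  have finS: "finite S" unfolding S_def using poly_roots_finite[OF P0] .
  define G where "G = [:0,1:] * H - smult c P"
  define P' where "P' = P - monom 1 n"
  have degG: "degree G \<le> n - 1"
  proof (rule degree_le_pred)
    fix i assume i: "i \<ge> n"
    have "coeff ([:0,1:] * H) i = coeff H (i - 1)" using i n1 by (cases i) auto
    moreover have "coeff H (i - 1) = (if i = n then c else 0)"
      using i degH n_def c_def by (auto simp: coeff_eq_0)
    moreover have "coeff P i = (if i = n then 1 else 0)"
      using i monic n_def by (auto simp: coeff_eq_0)
    ultimately show "coeff G i = 0" unfolding G_def by simp
  qed
  have degP': "degree P' \<le> n - 1"
  proof (rule degree_le_pred)
    fix i assume i: "i \<ge> n"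
    show "coeff P' i = 0" unfolding P'_def using i monic n_def by (auto simp: coeff_eq_0 coeff_monom)
  qed
  define A where "A = (\<Sum>i\<le>n-1. norm (coeff G i))"
  define B where "B = (\<Sum>i\<le>n-1. norm (coeff P' i))"
  have A0: "A \<ge> 0" "B \<ge> 0" unfolding A_def B_def by (auto intro: sum_nonneg)
  have Pdec: "poly P z = z ^ n + poly P' z" for z unfolding P'_def by (simp add: poly_monom)
  have Plow: "norm (poly P z) \<ge> norm z ^ n / 2" if "norm z \<ge> 1" "norm z \<ge> 2 * B" for z
  proof -
    have b: "norm (poly P' z) \<le> B * norm z ^ (n-1)" unfolding B_def by (rule poly_bound[OF degP' that(1)])
    have t: "norm z ^ (n-1) \<ge> 0" by simp
    have "2 * B * norm z ^ (n-1) \<le> norm z * norm z ^ (n-1)"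
      by (rule mult_right_mono[OF that(2) t])
    also have "norm z * norm z ^ (n-1) = norm z ^ n"
    proof -
      have "Suc (n-1) = n" using n1 by simp
      then show ?thesis using power_Suc[of "norm z" "n-1"] by simp
    qed
    finally have "norm (poly P' z) \<le> norm z ^ n / 2" using b by simp
    moreover have "z ^ n = poly P z - poly P' z" using Pdec[of z] by simp
    then have "norm (z ^ n) \<le> norm (poly P z) + norm (poly P' z)"
      using norm_triangle_ineq4[of "poly P z" "poly P' z"] by simp
    ultimately show ?thesis by (simp add: norm_power)
  qed
  define R0 where "R0 = 2 * max 1 B + 1"
  have R0: "R0 \<ge> 1" "R0 \<ge> 2 * B" unfolding R0_def by auto
  have roots_in: "norm z < R" if "z \<in> S" "R \<ge> R0" for z R
  proof (rule ccontr)
    assume "\<not> norm z < R"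
    then have z: "norm z \<ge> 1" "norm z \<ge> 2 * B" using that R0 by auto
    have "norm z ^ n / 2 > 0" using z(1) by (metis half_gt_zero_iff zero_less_one less_le_trans zero_less_power)
    with Plow[OF z] have "poly P z \<noteq> 0" by auto
    with that show False unfolding S_def by simp
  qed
  have bound: "norm ((\<Sum>p\<in>S. residue f p) - c) \<le> 2 * A / R" if R: "R \<ge> R0" for R
  proof -
    have Rp: "R > 0" "R \<ge> 1" "R \<ge> 2 * B" using R R0 by auto
    define g where "g = circlepath 0 R"
    have pimg: "path_image g = sphere 0 R" unfolding g_def using Rp by simp
    have PnzS: "poly P w \<noteq> 0" if "w \<notin> S" for w using that unfolding S_def by simp
    have avoid: "path_image g \<subseteq> UNIV - S" unfolding pimg using roots_in[OF _ R] by fastforce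
    have holf: "f holomorphic_on UNIV - S"
      unfolding f_def by (intro holomorphic_intros) (auto simp: PnzS)
    have res: "contour_integral g f = 2 * pi * \<i> * (\<Sum>p\<in>S. residue f p)"
    proof -
      have "contour_integral g f = 2 * pi * \<i> * (\<Sum>p\<in>S. winding_number g p * residue f p)"
        by (rule Residue_theorem[OF open_UNIV connected_UNIV finS holf _ _ avoid])
           (auto simp: g_def)
      also have "(\<Sum>p\<in>S. winding_number g p * residue f p) = (\<Sum>p\<in>S. residue f p)"
        by (rule sum.cong) (auto simp: g_def winding_number_circlepath roots_in[OF _ R])
      finally show ?thesis .
    qed
    define \<phi> where "\<phi> = (\<lambda>w. poly H w / poly P w - c / w)"
    have hQ: "(poly Q has_contour_integral 0) g"
      by (rule Cauchy_theorem_convex_simple[of _ UNIV]) (auto intro: holomorphic_intros simp: g_def)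
    have hC: "((\<lambda>w. c / w) has_contour_integral (2 * of_real pi * \<i> * c)) g"
      using Cauchy_integral_circlepath[of 0 R "\<lambda>_. c" 0] Rp unfolding g_def by simp
    have opn: "open (UNIV - (S \<union> {0}))" using finS by (auto intro: finite_imp_closed)
    have "\<phi> contour_integrable_on g"
    proof (rule contour_integrable_holomorphic_simple[OF _ opn])
      show "\<phi> holomorphic_on UNIV - (S \<union> {0})"
        unfolding \<phi>_def by (intro holomorphic_intros) (auto simp: PnzS)
      show "valid_path g" unfolding g_def by simp
      show "path_image g \<subseteq> UNIV - (S \<union> {0})" using avoid Rp unfolding pimg by auto
    qed
    then have hphi: "(\<phi> has_contour_integral contour_integral g \<phi>) g"
      by (rule has_contour_integral_integral)
    have "((\<lambda>w. poly Q w + \<phi> w + c / w) has_contour_integral (0 + contour_integral g \<phi> + 2 * of_real pi * \<i> * c)) g"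
      by (intro has_contour_integral_add hQ hphi hC)
    then have "(f has_contour_integral (0 + contour_integral g \<phi> + 2 * of_real pi * \<i> * c)) g"
    proof (rule has_contour_integral_eq)
      fix x assume x: "x \<in> path_image g"
      then have "x \<notin> S" using avoid by auto
      then have "poly P x \<noteq> 0" by (rule PnzS)
      moreover have "x \<noteq> 0" using x Rp unfolding pimg by auto
      ultimately have "poly P x \<noteq> 0" "x \<noteq> 0" by auto
      then show "poly Q x + \<phi> x + c / x = f x" unfolding f_def \<phi>_def
        by (simp add: field_simps)
    qed
    then have eq: "contour_integral g f = contour_integral g \<phi> + 2 * of_real pi * \<i> * c"
      by (simp add: contour_integral_unique)
    have phib: "norm (\<phi> x) \<le> 2 * A / R^2" if x: "norm (x - 0) = R" for x
    proof -
      have nx: "norm x = R" using x by simp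
      have Px: "norm (poly P x) \<ge> R ^ n / 2" using Plow[of x] nx Rp by simp
      have x0: "x \<noteq> 0" using nx Rp by auto
      have "R ^ n > 0" using Rp by simp
      then have P0x: "poly P x \<noteq> 0" using Px by auto
      have "\<phi> x = poly G x / (x * poly P x)"
        unfolding \<phi>_def G_def using x0 P0x by (simp add: field_simps)
      then have "norm (\<phi> x) = norm (poly G x) / (R * norm (poly P x))"
        by (simp add: norm_divide norm_mult nx)
      also have "\<dots> \<le> (A * R ^ (n-1)) / (R * (R ^ n / 2))"
      proof (rule frac_le)
        show "norm (poly G x) \<le> A * R ^ (n-1)" unfolding A_def using poly_bound[OF degG, of x] nx Rp by simp
        show "0 \<le> A * R ^ (n-1)" using A0 Rp by simp
        show "0 < R * (R ^ n / 2)" using Rp by simp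
        show "R * (R ^ n / 2) \<le> R * norm (poly P x)" using Px Rp by simp
      qed
      also have "\<dots> = 2 * A / R^2"
      proof -
        have "R ^ n = R ^ (n-1) * R" using n1 by (metis power_Suc2 Suc_diff_1 less_le_trans zero_less_one)
        then show ?thesis using Rp by (simp add: field_simps power2_eq_square)
      qed
      finally show ?thesis .
    qed
    have "norm (contour_integral g \<phi>) \<le> 2 * A / R^2 * (2 * pi * R)"
    proof -
      have "0 \<le> 2 * A / R^2" using A0 Rp by simp
      from has_contour_integral_bound_circlepath[OF hphi[unfolded g_def] this Rp(1) phib]
      show ?thesis unfolding g_def .
    qed
    also have "\<dots> = 4 * pi * A / R" using Rp by (simp add: field_simps power2_eq_square)
    finally have nb: "norm (contour_integral g \<phi>) \<le> 4 * pi * A / R" .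
    have "(\<Sum>p\<in>S. residue f p) - c = contour_integral g \<phi> / (2 * pi * \<i>)"
      using res eq by (simp add: field_simps)
    then have "norm ((\<Sum>p\<in>S. residue f p) - c) = norm (contour_integral g \<phi>) / (2 * pi)"
      by (simp add: norm_divide norm_mult)
    also have "\<dots> \<le> (4 * pi * A / R) / (2 * pi)" using nb by (intro divide_right_mono) auto
    also have "\<dots> = 2 * A / R" by simp
    finally show ?thesis .
  qed
  show ?thesis
  proof (rule ccontr)
    assume ne: "\<not> ?thesis"
    define d where "d = norm ((\<Sum>p\<in>S. residue f p) - c)"
    have d: "d > 0" using ne unfolding d_def S_def f_def c_def n_def by simp
    define R where "R = max R0 (4 * A / d)"
    have "R \<ge> R0" "R \<ge> 4 * A / d" unfolding R_def by auto
    then have "d \<le> 2 * A / R" using bound unfolding d_def by simp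
    moreover have "2 * A / R \<le> d / 2"
    proof -
      have Rp: "R > 0" using R0 \<open>R \<ge> R0\<close> by simp
      have "4 * A \<le> R * d" using \<open>R \<ge> 4 * A / d\<close> d by (simp add: field_simps)
      then show ?thesis using Rp by (simp add: field_simps)
    qed
    ultimately show False using d by simp
  qed
qed



lemma map_rat_int: "map_poly (of_rat :: rat \<Rightarrow> complex) (map_poly of_int p) = map_poly of_int p"
proof -
  have "map_poly (of_rat :: rat \<Rightarrow> complex) (map_poly of_int p) = map_poly (of_rat \<circ> of_int) p"
    by (rule map_poly_map_poly) simp_all
  also have "(of_rat \<circ> of_int :: int \<Rightarrow> complex) = of_int" by (rule ext) simp
  finally show ?thesis .
qed

context VQ begin

lemma residue_part:
  "complex_of_rat (counit r s (veval r s f)) =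
          (\<Sum>z\<in>{z. poly (map_poly of_int (Ppoly r s (r - 1))) z = 0}.
             residue (\<lambda>w. poly (map_poly of_rat f * map_poly of_int (Ppoly r s (r - 2))) w
                          / poly (map_poly of_int (Ppoly r s (r - 1))) w) z)"
proof -
  define g where "g = f * Pq (r-2)"
  define q where "q = g div Pq (r-1)"
  define h where "h = g mod Pq (r-1)"
  have gd: "g = Pq (r-1) * q + h" unfolding q_def h_def by simp
  define Pc :: "complex poly" where "Pc = map_poly of_int (Ppoly r s (r - 1))"
  define Qc :: "complex poly" where "Qc = map_poly of_rat q"
  define Hc :: "complex poly" where "Hc = map_poly of_rat h"
  have "map_poly of_rat f * map_poly of_int (Ppoly r s (r - 2)) = map_poly (of_rat :: rat \<Rightarrow> complex) g"
    unfolding g_def by (simp add: map_poly_rat_mult map_rat_int)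
  also have "\<dots> = Pc * Qc + Hc"
    unfolding gd Pc_def Qc_def Hc_def by (simp add: map_poly_rat_mult map_poly_rat_add map_rat_int)
  finally have F: "map_poly of_rat f * map_poly of_int (Ppoly r s (r - 2)) = Pc * Qc + Hc" .
  have dPc: "degree Pc = r - 1" "lead_coeff Pc = 1"
    unfolding Pc_def using Ppoly_deg[of r s "r-1"] by (simp_all add: map_poly_degree_eq coeff_map_poly)
  have dh: "degree h \<le> r - 2" unfolding h_def by (rule deg_mod)
  have "degree Hc \<le> degree h" unfolding Hc_def by (rule map_poly_degree_leq)
  then have dHc: "degree Hc < degree Pc" unfolding dPc using dh r3 by linarith
  have "(\<Sum>z\<in>{z. poly Pc z = 0}. residue (\<lambda>w. poly (Pc*Qc + Hc) w / poly Pc w) z) = coeff Hc (degree Pc - 1)"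
    by (rule residue_sum[OF dPc(2) dHc])
  also have "coeff Hc (degree Pc - 1) = of_rat (coeff h (r - 2))"
    unfolding Hc_def dPc by (simp add: coeff_map_poly numeral_eq_Suc)
  also have "coeff h (r - 2) = counit r s (veval r s f)"
    unfolding h_def g_def by (rule counit_formula[symmetric])
  finally have RR: "(\<Sum>z\<in>{z. poly Pc z = 0}. residue (\<lambda>w. poly (Pc*Qc + Hc) w / poly Pc w) z) = complex_of_rat (counit r s (veval r s f))" .
  show ?thesis unfolding Pc_def[symmetric] F using RR by simp
qed

end

theorem theorem2:
  fixes r s :: nat
  assumes "r \<ge> 3" and "odd r" and "odd s" and "coprime r s" and "0 < s" and "s < r"
  shows "lead_coeff (Ppoly r s (r - 2)) = 1 \<and> lead_coeff (Ppoly r s (r - 1)) = 1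
    \<and> degree (Ppoly r s (r - 2)) = r - 2 \<and> degree (Ppoly r s (r - 1)) = r - 1
    \<and> coprime (Ppoly r s (r - 2)) (Ppoly r s (r - 1))
    \<and> Fract (Ppoly r s (r - 1)) (Ppoly r s (r - 2)) = cfrac r s (r - 2)
    \<and> veval r s 1 = ebas 0
    \<and> (\<forall>f g. veval r s (f + g) = (\<lambda>k. veval r s f k + veval r s g k))
    \<and> (\<forall>c f. veval r s (smult c f) = (\<lambda>k. c * veval r s f k))
    \<and> (\<forall>f g. veval r s (f * g) = vmult r s (veval r s f) (veval r s g))
    \<and> (\<forall>f. veval r s f \<in> Vq r)
    \<and> (\<forall>v\<in>Vq r. \<exists>f. veval r s f = v)
    \<and> (\<forall>f. veval r s f = (\<lambda>_. 0) \<longleftrightarrow> map_poly of_int (Ppoly r s (r - 1)) dvd f)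
    \<and> (\<forall>f. complex_of_rat (counit r s (veval r s f)) =
          (\<Sum>z\<in>{z. poly (map_poly of_int (Ppoly r s (r - 1))) z = 0}.
             residue (\<lambda>w. poly (map_poly of_rat f * map_poly of_int (Ppoly r s (r - 2))) w
                          / poly (map_poly of_int (Ppoly r s (r - 1))) w) z))
    \<and> Ppoly r s (r - 1) = pcompose (riley r s) [:0, 0, 1:]"
proof -
  interpret VQ r s using assms by unfold_locales
  have e: "Suc (r - 2) = r - 1" using assms by simp
  have cop: "coprime (Ppoly r s (r - 2)) (Ppoly r s (r - 1))" using Pcoprime[of "r-2"] unfolding e by simp
  have cf: "Fract (Ppoly r s (r - 1)) (Ppoly r s (r - 2)) = cfrac r s (r - 2)"
    using cfrac_eq[of "r-2"] unfolding e by simp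
  show ?thesis
    using Ppoly_deg[of r s "r-2"] Ppoly_deg[of r s "r-1"] cop cf veval_1 veval_add veval_smult veval_mult
      veval_Vq veval_surj veval_kernel residue_part riley_thm
    by auto
qed


end
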